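(* Let $(\mathcal A,\varphi,\mathcal F,\Phi)$ be a ncps of type B$'$ with associated algebra $\mathcal B=\mathcal A\oplus\mathcal F$. Let $b_j=a_j+f_j\in\mathcal B$ ($a_j\in\mathcal A$, $f_j\in\mathcal F$, $j=1,2$) and $P\in\mathcal F$ with $\Phi(P)\ne0$. Assume that $a_1,a_2$ are free with respect to $\varphi$, that the pair $(\langle a_1,a_2\rangle,\langle P,f_1,f_2\rangle)$ is cyclic-antimonotone independent, and that $f_1,f_2$ are Boolean independent with respect to $\varphi_P$. Let $\mu_j$ be the distribution of $a_j$ w.r.t. $\varphi$ and $\nu_j$ the distribution of $f_j$ w.r.t. $\varphi_P$. Then $b_1+b_2$ has distribution $\mu_1\boxplus\mu_2$ w.r.t. $\varphi$, and w.r.t. $\varphi_P$ it has the distribution equal to the conditionally free convolution of $(\mu_1,\mu_1\lhd\nu_1)$ and $(\mu_2,\mu_2\lhd\nu_2)$.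
   Context: Ncps of type B$'$ $(\mathcal A,\varphi,\mathcal F,\Phi)$: $\mathcal A$ unital complex algebra, $\varphi(1_{\mathcal A})=1$, $\mathcal F$ an algebra which is an $\mathcal A$-bimodule compatible with its multiplication, $\Phi:\mathcal F\to\mathbb C$ linear. $\mathcal B=\mathcal A\oplus\mathcal F$ with product $(a_1,f_1)(a_2,f_2)=(a_1a_2,a_1f_2+f_1a_2+f_1f_2)$, unit $1_{\mathcal A}$; $\varphi(a+f):=\varphi(a)$. $\varphi_P(b):=\Phi(Pb)/\Phi(P)$ for $b\in\mathcal B$. $\langle a_1,a_2\rangle$ is the unital subalgebra of $\mathcal A$ generated by $a_1,a_2$, and $\langle P,f_1,f_2\rangle$ the subalgebra of $\mathcal F$ generated by $P,f_1,f_2$. Cyclic-antimonotone independence of $(\mathcal A_0,\mathcal F_0)$: $\Phi(c_0g_1c_1\cdots c_{n-1}g_nc_n)=\varphi(c_0c_n)\prod_{l=1}^{n-1}\varphi(c_l)\Phi(g_1\cdots g_n)$ for $n\ge1$, $c_l\in\mathcal A_0$, $g_l\in\mathcal F_0$. Elements are free/Boolean independent if the (unital, resp. non-unital) subalgebras they generate are; Boolean independence w.r.t. $\psi$: $\psi(c_1\cdots c_n)=\psi(c_1)\cdots\psi(c_n)$ for alternating indices. The distribution of $b$ w.r.t. $\omega$ is $x^n\mapsto\omega(b^n)$ on $\mathbb C[x]$. $\mu_1\boxplus\mu_2$ is the free convolution. $\mu\lhd\nu$ (antimonotone convolution) is the distribution of $y_1+y_2$ where $y_1,y_2$ have distributions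 $\mu,\nu$ and the pair of (not necessarily unital) algebras generated by $y_2$ and $y_1$ is monotonically independent, i.e. $\omega(z_0x_1z_1\cdots x_nz_n)=\omega(x_1\cdots x_n)\omega(z_0)\cdots\omega(z_n)$ for $x_l$ in the algebra of $y_2$ and $z_l$ in the unital algebra of $y_1$. The conditionally free convolution of $(\mu_1,\lambda_1)$ and $(\mu_2,\lambda_2)$ is the distribution w.r.t. $\psi$ of $c_1+c_2$, where $c_1,c_2$ generate unital subalgebras that are conditionally free w.r.t. $(\omega,\psi)$ (free w.r.t. $\omega$, and $\psi(d_1\cdots d_n)=\psi(d_1)\cdots\psi(d_n)$ for alternating $\omega$-centered $d_l$), with $c_i$ having distribution $\mu_i$ w.r.t. $\omega$ and $\lambda_i$ w.r.t. $\psi$. *)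

theory Defs
  imports Complex_Main
begin

class cscale =
  fixes cscale :: "complex \<Rightarrow> 'a \<Rightarrow> 'a"

class cvec = cscale + ab_group_add +
  assumes cscale_add_right: "cscale c (x + y) = cscale c x + cscale c y"
    and cscale_add_left: "cscale (c + d) x = cscale c x + cscale d x"
    and cscale_cscale: "cscale c (cscale d x) = cscale (c * d) x"
    and cscale_one: "cscale 1 x = x"

text \<open>Complex algebra, not necessarily unital (HOL's class ring has no unit).\<close>
class calg = cvec + ring +
  assumes mult_cscale_left: "cscale c x * y = cscale c (x * y)"
    and mult_cscale_right: "x * cscale c y = cscale c (x * y)"

class calg_1 = calg + ring_1

definition clinear :: "('a::cvec \<Rightarrow> complex) \<Rightarrow> bool" where
  "clinear f \<longleftrightarrow> (\<forall>x y. f (x + y) = f x + f y) \<and> (\<forall>c x. f (cscale c x) = c * f x)"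

definition cstate :: "('a::calg_1 \<Rightarrow> complex) \<Rightarrow> bool" where
  "cstate \<omega> \<longleftrightarrow> clinear \<omega> \<and> \<omega> 1 = 1"

inductive_set alg_gen :: "'a::calg set \<Rightarrow> 'a set" for S where
  zero: "0 \<in> alg_gen S"
| base: "s \<in> S \<Longrightarrow> s \<in> alg_gen S"
| add: "x \<in> alg_gen S \<Longrightarrow> y \<in> alg_gen S \<Longrightarrow> x + y \<in> alg_gen S"
| scale: "x \<in> alg_gen S \<Longrightarrow> cscale c x \<in> alg_gen S"
| mult: "x \<in> alg_gen S \<Longrightarrow> y \<in> alg_gen S \<Longrightarrow> x * y \<in> alg_gen S"

inductive_set ualg_gen :: "'a::calg_1 set \<Rightarrow> 'a set" for S where
  one: "1 \<in> ualg_gen S"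
| base: "s \<in> S \<Longrightarrow> s \<in> ualg_gen S"
| add: "x \<in> ualg_gen S \<Longrightarrow> y \<in> ualg_gen S \<Longrightarrow> x + y \<in> ualg_gen S"
| scale: "x \<in> ualg_gen S \<Longrightarrow> cscale c x \<in> ualg_gen S"
| mult: "x \<in> ualg_gen S \<Longrightarrow> y \<in> ualg_gen S \<Longrightarrow> x * y \<in> ualg_gen S"

text \<open>Product of a nonempty list in a possibly non-unital algebra.\<close>
fun lprod :: "'a::ring list \<Rightarrow> 'a" where
  "lprod [] = 0"
| "lprod [x] = x"
| "lprod (x # y # xs) = x * lprod (y # xs)"

text \<open>Distribution of y w.r.t. omega, as its moment sequence n \<mapsto> omega(y^n)
  (i.e. the functional x^n \<mapsto> omega(y^n) on C[x]).\<close>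
definition distr :: "('a::calg_1 \<Rightarrow> complex) \<Rightarrow> 'a \<Rightarrow> nat \<Rightarrow> complex" where
  "distr \<omega> y = (\<lambda>n. \<omega> (y ^ n))"

definition alternating :: "bool list \<Rightarrow> bool" where
  "alternating idx \<longleftrightarrow> (\<forall>k. Suc k < length idx \<longrightarrow> idx ! k \<noteq> idx ! Suc k)"

definition free2 :: "('a::calg_1 \<Rightarrow> complex) \<Rightarrow> 'a set \<Rightarrow> 'a set \<Rightarrow> bool" where
  "free2 \<omega> X Y \<longleftrightarrow>
     (\<forall>idx xs. xs \<noteq> [] \<and> length idx = length xs \<and> alternating idx \<and>
        (\<forall>k<length xs. xs ! k \<in> (if idx ! k then X else Y) \<and> \<omega> (xs ! k) = 0)
        \<longrightarrow> \<omega> (prod_list xs) = 0)"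

definition cfree2 :: "('a::calg_1 \<Rightarrow> complex) \<Rightarrow> ('a \<Rightarrow> complex) \<Rightarrow> 'a set \<Rightarrow> 'a set \<Rightarrow> bool" where
  "cfree2 \<omega> \<psi> X Y \<longleftrightarrow> free2 \<omega> X Y \<and>
     (\<forall>idx xs. xs \<noteq> [] \<and> length idx = length xs \<and> alternating idx \<and>
        (\<forall>k<length xs. xs ! k \<in> (if idx ! k then X else Y) \<and> \<omega> (xs ! k) = 0)
        \<longrightarrow> \<psi> (prod_list xs) = prod_list (map \<psi> xs))"

definition mono_indep :: "('a::calg_1 \<Rightarrow> complex) \<Rightarrow> 'a set \<Rightarrow> 'a set \<Rightarrow> bool" where
  "mono_indep \<omega> X Z \<longleftrightarrow>
     (\<forall>z0 xzs. xzs \<noteq> [] \<and> z0 \<in> Z \<and> (\<forall>(x, z) \<in> set xzs. x \<in> X \<and> z \<in> Z) \<longrightarrow>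
        \<omega> (z0 * prod_list (map (\<lambda>(x, z). x * z) xzs))
          = \<omega> (prod_list (map fst xzs)) * \<omega> z0 * prod_list (map (\<lambda>(x, z). \<omega> z) xzs))"

text \<open>mu is the free convolution of mu1, mu2 as seen from realisations in type 'c:
  for every ncps on 'c and free y1, y2 with distributions mu1, mu2, the
  distribution of y1 + y2 is mu.\<close>
definition free_conv_is :: "'c::calg_1 itself \<Rightarrow> (nat \<Rightarrow> complex) \<Rightarrow> (nat \<Rightarrow> complex) \<Rightarrow> (nat \<Rightarrow> complex) \<Rightarrow> bool" where
  "free_conv_is _ \<mu>1 \<mu>2 \<mu> \<longleftrightarrow>
     (\<forall>(\<omega>::'c \<Rightarrow> complex) y1 y2. cstate \<omega> \<and> free2 \<omega> (ualg_gen {y1}) (ualg_gen {y2}) \<and>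
        distr \<omega> y1 = \<mu>1 \<and> distr \<omega> y2 = \<mu>2 \<longrightarrow> distr \<omega> (y1 + y2) = \<mu>)"

text \<open>lam = mu \<lhd> nu, witnessed by a realisation in type 'e: y1, y2 with distributions
  mu, nu such that (alg(y2), unital alg(y1)) is monotonically independent and y1 + y2
  has distribution lam.\<close>
definition antimono_conv_in :: "'e::calg_1 itself \<Rightarrow> (nat \<Rightarrow> complex) \<Rightarrow> (nat \<Rightarrow> complex) \<Rightarrow> (nat \<Rightarrow> complex) \<Rightarrow> bool" where
  "antimono_conv_in _ \<mu> \<nu> lam \<longleftrightarrow>
     (\<exists>(\<omega>::'e \<Rightarrow> complex) y1 y2. cstate \<omega> \<and> mono_indep \<omega> (alg_gen {y2}) (ualg_gen {y1}) \<and>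
        distr \<omega> y1 = \<mu> \<and> distr \<omega> y2 = \<nu> \<and> distr \<omega> (y1 + y2) = lam)"

text \<open>lam is the conditionally free convolution of (mu1, mu1 \<lhd> nu1) and (mu2, mu2 \<lhd> nu2),
  as seen from realisations in type 'd (with the antimonotone convolutions
  realised in type 'e).\<close>
definition cfree_antimono_conv_is :: "'d::calg_1 itself \<Rightarrow> 'e::calg_1 itself \<Rightarrow>
    (nat \<Rightarrow> complex) \<Rightarrow> (nat \<Rightarrow> complex) \<Rightarrow> (nat \<Rightarrow> complex) \<Rightarrow> (nat \<Rightarrow> complex) \<Rightarrow> (nat \<Rightarrow> complex) \<Rightarrow> bool" where
  "cfree_antimono_conv_is _ te \<mu>1 \<nu>1 \<mu>2 \<nu>2 lam \<longleftrightarrow>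
     (\<forall>(\<omega>::'d \<Rightarrow> complex) \<psi> c1 c2. cstate \<omega> \<and> cstate \<psi> \<and>
        cfree2 \<omega> \<psi> (ualg_gen {c1}) (ualg_gen {c2}) \<and>
        distr \<omega> c1 = \<mu>1 \<and> distr \<omega> c2 = \<mu>2 \<and>
        antimono_conv_in te \<mu>1 \<nu>1 (distr \<psi> c1) \<and> antimono_conv_in te \<mu>2 \<nu>2 (distr \<psi> c2)
        \<longrightarrow> distr \<psi> (c1 + c2) = lam)"

text \<open>F is an algebra and an A-bimodule (left action lm, right action rm), compatible
  with its multiplication.\<close>
definition bimod_alg :: "('a::calg_1 \<Rightarrow> 'f::calg \<Rightarrow> 'f) \<Rightarrow> ('f \<Rightarrow> 'a \<Rightarrow> 'f) \<Rightarrow> bool" where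
  "bimod_alg lm rm \<longleftrightarrow>
     (\<forall>a b f. lm (a + b) f = lm a f + lm b f) \<and> (\<forall>a f g. lm a (f + g) = lm a f + lm a g) \<and>
     (\<forall>c a f. lm (cscale c a) f = cscale c (lm a f)) \<and> (\<forall>c a f. lm a (cscale c f) = cscale c (lm a f)) \<and>
     (\<forall>f a b. rm f (a + b) = rm f a + rm f b) \<and> (\<forall>f g a. rm (f + g) a = rm f a + rm g a) \<and>
     (\<forall>c a f. rm f (cscale c a) = cscale c (rm f a)) \<and> (\<forall>c a f. rm (cscale c f) a = cscale c (rm f a)) \<and>
     (\<forall>a b f. lm (a * b) f = lm a (lm b f)) \<and> (\<forall>f a b. rm f (a * b) = rm (rm f a) b) \<and>
     (\<forall>a f b. rm (lm a f) b = lm a (rm f b)) \<and> (\<forall>f. lm 1 f = f) \<and> (\<forall>f. rm f 1 = f) \<and>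
     (\<forall>a f g. lm a (f * g) = lm a f * g) \<and> (\<forall>f g a. rm (f * g) a = f * rm g a) \<and>
     (\<forall>f a g. rm f a * g = f * lm a g)"

definition ncps_B' :: "('a::calg_1 \<Rightarrow> complex) \<Rightarrow> ('f::calg \<Rightarrow> complex) \<Rightarrow> ('a \<Rightarrow> 'f \<Rightarrow> 'f) \<Rightarrow> ('f \<Rightarrow> 'a \<Rightarrow> 'f) \<Rightarrow> bool" where
  "ncps_B' \<phi> \<Phi> lm rm \<longleftrightarrow> cstate \<phi> \<and> clinear \<Phi> \<and> bimod_alg lm rm"

definition badd :: "'a::calg_1 \<times> 'f::calg \<Rightarrow> 'a \<times> 'f \<Rightarrow> 'a \<times> 'f" where
  "badd x y = (fst x + fst y, snd x + snd y)"

definition bscale :: "complex \<Rightarrow> 'a::calg_1 \<times> 'f::calg \<Rightarrow> 'a \<times> 'f" where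
  "bscale c x = (cscale c (fst x), cscale c (snd x))"

definition bmul :: "('a::calg_1 \<Rightarrow> 'f::calg \<Rightarrow> 'f) \<Rightarrow> ('f \<Rightarrow> 'a \<Rightarrow> 'f) \<Rightarrow> 'a \<times> 'f \<Rightarrow> 'a \<times> 'f \<Rightarrow> 'a \<times> 'f" where
  "bmul lm rm x y = (fst x * fst y, lm (fst x) (snd y) + rm (snd x) (fst y) + snd x * snd y)"

definition bpow :: "('a::calg_1 \<Rightarrow> 'f::calg \<Rightarrow> 'f) \<Rightarrow> ('f \<Rightarrow> 'a \<Rightarrow> 'f) \<Rightarrow> 'a \<times> 'f \<Rightarrow> nat \<Rightarrow> 'a \<times> 'f" where
  "bpow lm rm x n = (bmul lm rm x ^^ n) (1, 0)"

definition bprod_list :: "('a::calg_1 \<Rightarrow> 'f::calg \<Rightarrow> 'f) \<Rightarrow> ('f \<Rightarrow> 'a \<Rightarrow> 'f) \<Rightarrow> ('a \<times> 'f) list \<Rightarrow> 'a \<times> 'f" where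
  "bprod_list lm rm xs = foldr (bmul lm rm) xs (1, 0)"

inductive_set balg_gen :: "('a::calg_1 \<Rightarrow> 'f::calg \<Rightarrow> 'f) \<Rightarrow> ('f \<Rightarrow> 'a \<Rightarrow> 'f) \<Rightarrow> ('a \<times> 'f) set \<Rightarrow> ('a \<times> 'f) set"
  for lm rm S where
  zero: "(0, 0) \<in> balg_gen lm rm S"
| base: "s \<in> S \<Longrightarrow> s \<in> balg_gen lm rm S"
| add: "x \<in> balg_gen lm rm S \<Longrightarrow> y \<in> balg_gen lm rm S \<Longrightarrow> badd x y \<in> balg_gen lm rm S"
| scale: "x \<in> balg_gen lm rm S \<Longrightarrow> bscale c x \<in> balg_gen lm rm S"
| mult: "x \<in> balg_gen lm rm S \<Longrightarrow> y \<in> balg_gen lm rm S \<Longrightarrow> bmul lm rm x y \<in> balg_gen lm rm S"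

definition phiB :: "('a::calg_1 \<Rightarrow> complex) \<Rightarrow> 'a \<times> 'f::calg \<Rightarrow> complex" where
  "phiB \<phi> x = \<phi> (fst x)"

text \<open>phi_P(b) = Phi(P b) / Phi(P); note P b lies in F.\<close>
definition phiP :: "('f::calg \<Rightarrow> complex) \<Rightarrow> ('a::calg_1 \<Rightarrow> 'f \<Rightarrow> 'f) \<Rightarrow> ('f \<Rightarrow> 'a \<Rightarrow> 'f) \<Rightarrow> 'f \<Rightarrow> 'a \<times> 'f \<Rightarrow> complex" where
  "phiP \<Phi> lm rm P x = \<Phi> (snd (bmul lm rm (0, P) x)) / \<Phi> P"

definition distrB :: "('a::calg_1 \<times> 'f::calg \<Rightarrow> complex) \<Rightarrow> ('a \<Rightarrow> 'f \<Rightarrow> 'f) \<Rightarrow> ('f \<Rightarrow> 'a \<Rightarrow> 'f) \<Rightarrow> 'a \<times> 'f \<Rightarrow> nat \<Rightarrow> complex" where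
  "distrB \<omega> lm rm x = (\<lambda>n. \<omega> (bpow lm rm x n))"

definition bool_indepB :: "('a::calg_1 \<Rightarrow> 'f::calg \<Rightarrow> 'f) \<Rightarrow> ('f \<Rightarrow> 'a \<Rightarrow> 'f) \<Rightarrow> ('a \<times> 'f \<Rightarrow> complex) \<Rightarrow>
    ('a \<times> 'f) set \<Rightarrow> ('a \<times> 'f) set \<Rightarrow> bool" where
  "bool_indepB lm rm \<psi> X Y \<longleftrightarrow>
     (\<forall>idx xs. xs \<noteq> [] \<and> length idx = length xs \<and> alternating idx \<and>
        (\<forall>k<length xs. xs ! k \<in> (if idx ! k then X else Y))
        \<longrightarrow> \<psi> (bprod_list lm rm xs) = prod_list (map \<psi> xs))"

text \<open>The list gcs = [(g1,c1),...,(gn,cn)]; the word c0 g1 c1 ... gn cn in F is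
  c0 \<cdot> ((g1 c1)(g2 c2)...(gn cn)).\<close>
definition cam_indep :: "('a::calg_1 \<Rightarrow> complex) \<Rightarrow> ('f::calg \<Rightarrow> complex) \<Rightarrow> ('a \<Rightarrow> 'f \<Rightarrow> 'f) \<Rightarrow> ('f \<Rightarrow> 'a \<Rightarrow> 'f) \<Rightarrow>
    'a set \<Rightarrow> 'f set \<Rightarrow> bool" where
  "cam_indep \<phi> \<Phi> lm rm A0 F0 \<longleftrightarrow>
     (\<forall>c0 gcs. gcs \<noteq> [] \<and> c0 \<in> A0 \<and> (\<forall>(g, c) \<in> set gcs. g \<in> F0 \<and> c \<in> A0) \<longrightarrow>
        \<Phi> (lm c0 (lprod (map (\<lambda>(g, c). rm g c) gcs)))
          = \<phi> (c0 * snd (last gcs)) * prod_list (map (\<lambda>(g, c). \<phi> c) (butlast gcs))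
            * \<Phi> (lprod (map fst gcs)))"

end

theory Submission
  imports Defs "HOL-Computational_Algebra.Polynomial"
begin

lemma cscale_zero_left[simp]: "cscale 0 (x::'a::cvec) = 0"
proof -
  have "cscale 0 x = cscale (0+0) x" by simp
  also have "\<dots> = cscale 0 x + cscale 0 x" by (rule cscale_add_left)
  finally show ?thesis by simp
qed

lemma cscale_zero_right[simp]: "cscale c (0::'a::cvec) = 0"
proof -
  have "cscale c (0::'a) = cscale c (0+0)" by simp
  also have "\<dots> = cscale c 0 + cscale c 0" by (rule cscale_add_right)
  finally show ?thesis by simp
qed

lemma cscale_minus_right: "cscale c (- x) = - cscale c (x::'a::cvec)"
proof -
  have "cscale c (-x) + cscale c x = cscale c (-x + x)" by (rule cscale_add_right[symmetric])
  also have "\<dots> = 0" by simp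
  finally have "cscale c (-x) + cscale c x = 0" .
  thus ?thesis by (metis minus_unique add.commute)
qed

lemma cscale_diff_right: "cscale c (x - y) = cscale c x - cscale c (y::'a::cvec)"
  by (metis diff_conv_add_uminus cscale_add_right cscale_minus_right)

lemma cscale_sum_right: "cscale c (sum f A) = (\<Sum>i\<in>A. cscale c (f i :: 'a::cvec))"
  by (induction A rule: infinite_finite_induct) (auto simp: cscale_add_right)

lemma cscale_one_mult: "cscale c (1::'a::calg_1) * x = cscale c x"
  by (simp add: mult_cscale_left)

lemma mult_cscale_one: "x * cscale c (1::'a::calg_1) = cscale c x"
  by (simp add: mult_cscale_right)

lemma clinear_add: "clinear f \<Longrightarrow> f (x + y) = f x + f y"
  by (simp add: clinear_def)
lemma clinear_scale: "clinear f \<Longrightarrow> f (cscale c x) = c * f x"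
  by (simp add: clinear_def)
lemma clinear_zero: "clinear f \<Longrightarrow> f 0 = 0"
  using clinear_add[of f 0 0] by simp
lemma clinear_minus: "clinear f \<Longrightarrow> f (- x) = - f x"
  using clinear_add[of f x "-x"] clinear_zero[of f] by (metis minus_unique right_minus)
lemma clinear_diff: "clinear f \<Longrightarrow> f (x - y) = f x - f y"
  by (metis diff_conv_add_uminus clinear_add clinear_minus)
lemma clinear_sum: "clinear f \<Longrightarrow> f (sum g A) = (\<Sum>i\<in>A. f (g i))"
  by (induction A rule: infinite_finite_induct) (auto simp: clinear_add clinear_zero)

section \<open>Polynomial evaluation\<close>

definition peval :: "complex poly \<Rightarrow> 'a::calg_1 \<Rightarrow> 'a" where
  "peval p x = (\<Sum>k\<le>degree p. cscale (coeff p k) (x ^ k))"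

lemma peval_bound:
  assumes "degree p \<le> n"
  shows "peval p x = (\<Sum>k\<le>n. cscale (coeff p k) (x ^ k))"
  unfolding peval_def
  by (rule sum.mono_neutral_left) (use assms in \<open>auto simp: coeff_eq_0\<close>)

lemma peval_0[simp]: "peval 0 x = 0"
  by (simp add: peval_def)

lemma peval_add: "peval (p + q) x = peval p x + peval q x"
proof -
  let ?n = "max (degree p) (degree q)"
  have "peval (p+q) x = (\<Sum>k\<le>?n. cscale (coeff (p+q) k) (x ^ k))"
    by (rule peval_bound) (simp add: degree_add_le)
  also have "\<dots> = (\<Sum>k\<le>?n. cscale (coeff p k) (x ^ k)) + (\<Sum>k\<le>?n. cscale (coeff q k) (x ^ k))"
    by (simp add: cscale_add_left sum.distrib)
  also have "\<dots> = peval p x + peval q x"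
    by (simp add: peval_bound[symmetric])
  finally show ?thesis .
qed

lemma peval_smult: "peval (smult c p) x = cscale c (peval p x)"
proof -
  have "peval (smult c p) x = (\<Sum>k\<le>degree p. cscale (coeff (smult c p) k) (x ^ k))"
    by (rule peval_bound) simp
  thus ?thesis by (simp add: peval_def cscale_sum_right cscale_cscale)
qed

lemma peval_minus: "peval (- p) x = - peval p x"
  using peval_add[of p "-p" x] by (metis minus_unique right_minus peval_0)

lemma peval_diff: "peval (p - q) x = peval p x - peval q x"
  using peval_add[of "p - q" q x] by (simp add: algebra_simps)

lemma peval_pCons: "peval (pCons a p) x = cscale a 1 + x * peval p x"
proof -
  have "peval (pCons a p) x = (\<Sum>k\<le>Suc (degree p). cscale (coeff (pCons a p) k) (x ^ k))"
    by (rule peval_bound) (simp add: degree_pCons_le)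
  also have "\<dots> = cscale a 1 + (\<Sum>k\<le>degree p. cscale (coeff p k) (x ^ Suc k))"
    by (subst sum.atMost_Suc_shift) simp
  also have "(\<Sum>k\<le>degree p. cscale (coeff p k) (x ^ Suc k)) = x * peval p x"
    by (simp add: peval_def sum_distrib_left mult_cscale_right)
  finally show ?thesis .
qed

lemma peval_const[simp]: "peval [:c:] x = cscale c 1"
  by (simp add: peval_def)

lemma peval_one[simp]: "peval 1 x = 1"
  by (simp add: one_pCons cscale_one)

lemma peval_X[simp]: "peval [:0, 1:] x = x"
  by (simp add: peval_pCons cscale_one)

lemma peval_mult: "peval (p * q) x = peval p x * peval q x"
proof (induction p)
  case 0 then show ?case by simp
next
  case (pCons a p)
  have "peval (pCons a p * q) x = peval (smult a q + pCons 0 (p * q)) x" by simp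
  also have "\<dots> = cscale a (peval q x) + x * (peval p x * peval q x)"
    by (simp add: peval_add peval_smult peval_pCons pCons)
  also have "\<dots> = (cscale a 1 + x * peval p x) * peval q x"
    by (simp add: distrib_right mult_cscale_left mult.assoc)
  finally show ?case by (simp add: peval_pCons)
qed

lemma ualg_gen_zero: "0 \<in> ualg_gen S"
proof -
  have "cscale 0 1 \<in> ualg_gen S" by (rule ualg_gen.scale, rule ualg_gen.one)
  then show ?thesis by (simp only: cscale_zero_left)
qed

lemma ualg_gen_sum: "(\<And>i. i \<in> A \<Longrightarrow> f i \<in> ualg_gen S) \<Longrightarrow> sum f A \<in> ualg_gen S"
proof (induction A rule: infinite_finite_induct)
  case (infinite A)
  then show ?case using ualg_gen_zero by simp
next
  case empty
  then show ?case by (simp only: sum.empty ualg_gen_zero)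
next
  case (insert x F)
  have "f x \<in> ualg_gen S" using insert.prems by blast
  moreover have "sum f F \<in> ualg_gen S" using insert by blast
  moreover have "sum f (insert x F) = f x + sum f F" using insert.hyps by simp
  ultimately show ?case by (metis ualg_gen.add)
qed

lemma ualg_gen_pow: "x \<in> ualg_gen S \<Longrightarrow> x ^ k \<in> ualg_gen S"
  by (induction k) (auto intro: ualg_gen.intros)

lemma peval_in: "peval p x \<in> ualg_gen {x}"
  unfolding peval_def
  by (intro ualg_gen_sum ualg_gen.scale ualg_gen_pow ualg_gen.base) simp

lemma peval_moments:
  assumes "clinear \<omega>1" "clinear \<omega>2" "\<And>k. \<omega>1 (x ^ k) = \<omega>2 (y ^ k)"
  shows "\<omega>1 (peval p x) = \<omega>2 (peval p y)"
  using assms by (simp add: peval_def clinear_sum clinear_scale)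

lemma prod_list_update_add:
  "k < length xs \<Longrightarrow> prod_list (xs[k := a + b]) = prod_list (xs[k := a]) + prod_list (xs[k := (b::'a::ring_1)])"
proof (induction xs arbitrary: k)
  case Nil then show ?case by simp
next
  case (Cons y ys)
  then show ?case by (cases k) (auto simp: algebra_simps)
qed

lemma prod_list_update_scale:
  "k < length xs \<Longrightarrow> prod_list (xs[k := cscale c a]) = cscale c (prod_list (xs[k := (a::'a::calg_1)]))"
proof (induction xs arbitrary: k)
  case Nil then show ?case by simp
next
  case (Cons y ys)
  then show ?case by (cases k) (auto simp: mult_cscale_left mult_cscale_right)
qed

lemma prod_list_update_one:
  "k < length xs \<Longrightarrow> prod_list (xs[k := 1]) = prod_list (take k xs @ drop (Suc k) (xs::'a::monoid_mult list))"
proof (induction xs arbitrary: k)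
  case Nil then show ?case by simp
next
  case (Cons y ys)
  then show ?case by (cases k) auto
qed

definition E :: "(bool \<Rightarrow> 'a::calg_1) \<Rightarrow> (bool \<times> complex poly) list \<Rightarrow> 'a" where
  "E x zs = prod_list (map (\<lambda>(i, p). peval p (x i)) zs)"

lemma E_update_add:
  assumes "k < length zs"
  shows "E x (zs[k := (i, p + q)]) = E x (zs[k := (i, p)]) + E x (zs[k := (i, q)])"
  using assms by (simp add: E_def map_update peval_add prod_list_update_add)

lemma E_update_const:
  assumes "k < length zs"
  shows "E x (zs[k := (i, [:c:])]) = cscale c (E x (take k zs @ drop (Suc k) zs))"
  using assms by (simp add: E_def map_update prod_list_update_scale prod_list_update_one take_map drop_map)

lemma E_merge:
  assumes "Suc k < length zs" "fst (zs ! k) = fst (zs ! Suc k)"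
  shows "E x zs = E x (take k zs @ (fst (zs!k), snd (zs!k) * snd (zs ! Suc k)) # drop (Suc (Suc k)) zs)"
proof -
  have zs: "zs = take k zs @ zs!k # zs ! Suc k # drop (Suc (Suc k)) zs"
    using assms(1) by (metis Cons_nth_drop_Suc Suc_lessD append_take_drop_id)
  have "E x zs = E x (take k zs @ zs!k # zs ! Suc k # drop (Suc (Suc k)) zs)"
    using zs by simp
  also have "\<dots> = E x (take k zs @ (fst (zs!k), snd (zs!k) * snd (zs ! Suc k)) # drop (Suc (Suc k)) zs)"
    using assms(2)
    by (cases "zs!k"; cases "zs ! Suc k") (simp add: E_def peval_mult mult.assoc)
  finally show ?thesis .
qed

lemma E_Nil[simp]: "E x [] = 1" by (simp add: E_def)

lemma unique_E:
  fixes x :: "bool \<Rightarrow> 'c::calg_1" and y :: "bool \<Rightarrow> 'd::calg_1"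
  assumes c1: "clinear \<chi>1" "\<chi>1 1 = 1" and c2: "clinear \<chi>2" "\<chi>2 1 = 1"
    and o1: "clinear \<omega>1" "\<omega>1 1 = 1"
    and cent: "\<And>zs. zs \<noteq> [] \<Longrightarrow> alternating (map fst zs) \<Longrightarrow>
                 (\<forall>(i,p)\<in>set zs. \<omega>1 (peval p (x i)) = 0) \<Longrightarrow> \<chi>1 (E x zs) = \<chi>2 (E y zs)"
  shows "\<chi>1 (E x zs) = \<chi>2 (E y zs)"
proof (induction "length zs" arbitrary: zs rule: less_induct)
  case less
  show ?case
  proof (cases "zs = []")
    case True then show ?thesis using c1 c2 by simp
  next
    case ne: False
    show ?thesis
    proof (cases "alternating (map fst zs)")
      case False
      then obtain k where k: "Suc k < length zs" "fst (zs!k) = fst (zs ! Suc k)"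
        by (auto simp: alternating_def)
      define zs' where "zs' = take k zs @ (fst (zs!k), snd (zs!k) * snd (zs ! Suc k)) # drop (Suc (Suc k)) zs"
      have "length zs' < length zs" using k by (simp add: zs'_def)
      then have "\<chi>1 (E x zs') = \<chi>2 (E y zs')" by (rule less)
      then show ?thesis using E_merge[OF k, of x] E_merge[OF k, of y] by (simp add: zs'_def)
    next
      case alt: True
      define n where "n = length zs"
      define m where "m j = \<omega>1 (peval (snd (zs!j)) (x (fst (zs!j))))" for j
      define cz where "cz j = (fst (zs!j), snd (zs!j) - [:m j:])" for j
      define ZS where "ZS k = map (\<lambda>j. if j < k then zs!j else cz j) [0..<n]" for k
      have lenZS[simp]: "length (ZS k) = n" for k by (simp add: ZS_def)
      have fstZS: "map fst (ZS k) = map fst zs" for k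
        by (rule nth_equalityI) (auto simp: ZS_def n_def cz_def)
      have "\<chi>1 (E x (ZS k)) = \<chi>2 (E y (ZS k))" if "k \<le> n" for k
        using that
      proof (induction k)
        case 0
        have "ZS 0 \<noteq> []" using ne by (simp add: ZS_def n_def)
        moreover have "alternating (map fst (ZS 0))" using alt fstZS by simp
        moreover have "\<forall>(i,p)\<in>set (ZS 0). \<omega>1 (peval p (x i)) = 0"
        proof
          fix ip assume "ip \<in> set (ZS 0)"
          then obtain j where j: "j < n" "ip = cz j" by (auto simp: ZS_def)
          show "case ip of (i, p) \<Rightarrow> \<omega>1 (peval p (x i)) = 0"
            using j o1 by (simp add: cz_def peval_diff clinear_diff clinear_scale m_def)
        qed
        ultimately show ?case by (rule cent)
      next
        case (Suc k)
        then have kn: "k < n" by simp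
        have Z1: "ZS (Suc k) = (ZS k)[k := zs!k]"
        proof (rule nth_equalityI)
          fix i assume "i < length (ZS (Suc k))"
          then show "ZS (Suc k) ! i = (ZS k)[k := zs!k] ! i"
            using kn by (cases "i = k") (simp_all add: ZS_def)
        qed simp
        have Zk: "ZS k ! k = cz k" using kn by (simp add: ZS_def)
        have zk: "zs!k = (fst (cz k), snd (cz k) + [:m k:])" by (simp add: cz_def)
        have Z2: "(ZS k)[k := (fst (cz k), snd (cz k))] = ZS k"
          using Zk by (metis list_update_id prod.collapse)
        define R where "R = take k (ZS k) @ drop (Suc k) (ZS k)"
        have lR: "length R < length zs" using kn by (simp add: R_def n_def)
        have IH2: "\<chi>1 (E x R) = \<chi>2 (E y R)" using lR by (rule less)
        have ex: "E x (ZS (Suc k)) = E x (ZS k) + cscale (m k) (E x R)" for x :: "bool \<Rightarrow> 'e::calg_1"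
        proof -
          have "E x (ZS (Suc k)) = E x ((ZS k)[k := (fst (cz k), snd (cz k) + [:m k:])])"
            by (simp only: Z1 zk)
          also have "\<dots> = E x ((ZS k)[k := (fst (cz k), snd (cz k))]) + E x ((ZS k)[k := (fst (cz k), [:m k:])])"
            using kn by (intro E_update_add) simp
          also have "E x ((ZS k)[k := (fst (cz k), snd (cz k))]) = E x (ZS k)"
            by (simp only: Z2)
          also have "E x ((ZS k)[k := (fst (cz k), [:m k:])]) = cscale (m k) (E x R)"
            unfolding R_def using kn by (intro E_update_const) simp
          finally show ?thesis .
        qed
        have IHk: "\<chi>1 (E x (ZS k)) = \<chi>2 (E y (ZS k))" using Suc.IH kn by simp
        have "\<chi>1 (E x (ZS (Suc k))) = \<chi>1 (E x (ZS k)) + m k * \<chi>1 (E x R)"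
          by (simp only: ex clinear_add[OF c1(1)] clinear_scale[OF c1(1)])
        also have "\<dots> = \<chi>2 (E y (ZS k)) + m k * \<chi>2 (E y R)"
          by (simp only: IHk IH2)
        also have "\<dots> = \<chi>2 (E y (ZS (Suc k)))"
          by (simp only: ex clinear_add[OF c2(1)] clinear_scale[OF c2(1)])
        finally show ?case .
      qed
      moreover have "ZS n = zs"
        by (rule nth_equalityI) (auto simp: ZS_def n_def)
      ultimately show ?thesis by auto
    qed
  qed
qed



section \<open>Endomorphism algebra of A x F\<close>

definition lin_end :: "('a::calg_1 \<times> 'f::calg \<Rightarrow> 'a \<times> 'f) \<Rightarrow> bool" where
  "lin_end T \<longleftrightarrow> (\<forall>y z. T (badd y z) = badd (T y) (T z)) \<and> (\<forall>c y. T (bscale c y) = bscale c (T y))"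

typedef (overloaded) ('a::calg_1, 'f::calg) lend = "{T :: 'a \<times> 'f \<Rightarrow> 'a \<times> 'f. lin_end T}"
  by (rule exI[of _ id]) (simp add: lin_end_def)

lemma badd_eq: "badd x y = (fst x + fst y, snd x + snd y)" by (simp add: badd_def)
lemma bscale_eq: "bscale c x = (cscale c (fst x), cscale c (snd x))" by (simp add: bscale_def)

lemma lin_end_Rep: "lin_end (Rep_lend T)" using Rep_lend by simp

lemma Rep_badd: "Rep_lend T (badd y z) = badd (Rep_lend T y) (Rep_lend T z)"
  using lin_end_Rep[of T] unfolding lin_end_def by blast
lemma Rep_bscale: "Rep_lend T (bscale c y) = bscale c (Rep_lend T y)"
  using lin_end_Rep[of T] unfolding lin_end_def by blast

lemma Rep_fst_add: "fst (Rep_lend T (a + a', f + f')) = fst (Rep_lend T (a, f)) + fst (Rep_lend T (a', f'))"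
  using Rep_badd[of T "(a,f)" "(a',f')"] by (simp add: badd_def)
lemma Rep_snd_add: "snd (Rep_lend T (a + a', f + f')) = snd (Rep_lend T (a, f)) + snd (Rep_lend T (a', f'))"
  using Rep_badd[of T "(a,f)" "(a',f')"] by (simp add: badd_def)

lemma Rep_add_pair: "Rep_lend T (a + a', f + f') = badd (Rep_lend T (a, f)) (Rep_lend T (a', f'))"
  using Rep_badd[of T "(a,f)" "(a',f')"] by (simp add: badd_def)

lemma Rep_scale_pair: "Rep_lend T (cscale c a, cscale c f) = bscale c (Rep_lend T (a, f))"
  using Rep_bscale[of T c "(a,f)"] by (simp add: bscale_def)

lemma Rep_zero_pair: "Rep_lend T (0, 0) = (0, 0)"
proof -
  have "Rep_lend T (0 + 0, 0 + 0) = badd (Rep_lend T (0, 0)) (Rep_lend T (0, 0))"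
    by (rule Rep_add_pair)
  then show ?thesis by (simp add: badd_def prod_eq_iff)
qed

lemma Rep_neg_pair: "Rep_lend T (- a, - f) = (- fst (Rep_lend T (a, f)), - snd (Rep_lend T (a, f)))"
proof -
  have "Rep_lend T (a + - a, f + - f) = badd (Rep_lend T (a, f)) (Rep_lend T (- a, - f))"
    by (rule Rep_add_pair)
  then have "badd (Rep_lend T (a, f)) (Rep_lend T (- a, - f)) = (0, 0)"
    by (simp add: Rep_zero_pair)
  then show ?thesis by (simp add: badd_def prod_eq_iff eq_neg_iff_add_eq_0 add.commute)
qed

lemma lin_end_zero: "lin_end (\<lambda>_. (0, 0))"
  by (simp add: lin_end_def badd_def bscale_def)
lemma lin_end_id: "lin_end id"
  by (simp add: lin_end_def)
lemma lin_end_add: "lin_end (\<lambda>y. badd (Rep_lend T y) (Rep_lend S y))"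
  unfolding lin_end_def
proof (intro allI conjI)
  fix y z :: "'a::calg_1 \<times> 'b::calg" and c
  show "badd (Rep_lend T (badd y z)) (Rep_lend S (badd y z)) =
        badd (badd (Rep_lend T y) (Rep_lend S y)) (badd (Rep_lend T z) (Rep_lend S z))"
    by (simp only: Rep_badd) (simp add: badd_def algebra_simps)
  show "badd (Rep_lend T (bscale c y)) (Rep_lend S (bscale c y)) = bscale c (badd (Rep_lend T y) (Rep_lend S y))"
    by (simp only: Rep_bscale) (simp add: badd_def bscale_def cscale_add_right)
qed
lemma lin_end_neg: "lin_end (\<lambda>y. (- fst (Rep_lend T y), - snd (Rep_lend T y)))"
  unfolding lin_end_def
proof (intro allI conjI)
  fix y z :: "'a::calg_1 \<times> 'b::calg" and c
  show "(- fst (Rep_lend T (badd y z)), - snd (Rep_lend T (badd y z))) =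
        badd (- fst (Rep_lend T y), - snd (Rep_lend T y)) (- fst (Rep_lend T z), - snd (Rep_lend T z))"
    by (simp only: Rep_badd) (simp add: badd_def algebra_simps)
  show "(- fst (Rep_lend T (bscale c y)), - snd (Rep_lend T (bscale c y))) =
        bscale c (- fst (Rep_lend T y), - snd (Rep_lend T y))"
    by (simp only: Rep_bscale) (simp add: bscale_def cscale_minus_right)
qed
lemma lin_end_comp: "lin_end (Rep_lend T \<circ> Rep_lend S)"
  unfolding lin_end_def by (simp add: Rep_badd Rep_bscale)
lemma lin_end_scale: "lin_end (\<lambda>y. bscale c (Rep_lend T y))"
  unfolding lin_end_def
proof (intro allI conjI)
  fix y z :: "'a::calg_1 \<times> 'b::calg" and d
  show "bscale c (Rep_lend T (badd y z)) = badd (bscale c (Rep_lend T y)) (bscale c (Rep_lend T z))"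
    by (simp only: Rep_badd) (simp add: badd_def bscale_def cscale_add_right)
  show "bscale c (Rep_lend T (bscale d y)) = bscale d (bscale c (Rep_lend T y))"
    by (simp only: Rep_bscale) (simp add: bscale_def cscale_cscale mult.commute)
qed

instantiation lend :: (calg_1, calg) "{zero, one, plus, minus, uminus, times, cscale}"
begin
definition "zero_lend = Abs_lend (\<lambda>_. (0, 0))"
definition "one_lend = Abs_lend id"
definition "plus_lend T S = Abs_lend (\<lambda>y. badd (Rep_lend T y) (Rep_lend S y))"
definition "uminus_lend T = Abs_lend (\<lambda>y. (- fst (Rep_lend T y), - snd (Rep_lend T y)))"
definition "minus_lend T S = Abs_lend (\<lambda>y. badd (Rep_lend T y) (- fst (Rep_lend S y), - snd (Rep_lend S y)))"
definition "times_lend T S = Abs_lend (Rep_lend T \<circ> Rep_lend S)"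
definition "cscale_lend c T = Abs_lend (\<lambda>y. bscale c (Rep_lend T y))"
instance ..
end

lemma Rep_zero: "Rep_lend (0::('a::calg_1,'f::calg) lend) = (\<lambda>_. (0, 0))"
  by (simp add: zero_lend_def Abs_lend_inverse lin_end_zero)
lemma Rep_one: "Rep_lend (1::('a::calg_1,'f::calg) lend) = id"
  by (simp add: one_lend_def Abs_lend_inverse lin_end_id)
lemma Rep_plus: "Rep_lend (T + S) = (\<lambda>y. badd (Rep_lend T y) (Rep_lend S y))"
  by (simp add: plus_lend_def Abs_lend_inverse lin_end_add)
lemma Rep_uminus: "Rep_lend (- T) = (\<lambda>y. (- fst (Rep_lend T y), - snd (Rep_lend T y)))"
  by (simp add: uminus_lend_def Abs_lend_inverse lin_end_neg)
lemma lin_end_minus: "lin_end (\<lambda>y. badd (Rep_lend T y) (- fst (Rep_lend S y), - snd (Rep_lend S y)))"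
  using lin_end_add[of T "- S"] by (simp add: Rep_uminus)
lemma Rep_minus: "Rep_lend (T - S) = (\<lambda>y. badd (Rep_lend T y) (- fst (Rep_lend S y), - snd (Rep_lend S y)))"
  by (simp add: minus_lend_def Abs_lend_inverse lin_end_minus)
lemma Rep_times: "Rep_lend (T * S) = Rep_lend T \<circ> Rep_lend S"
  by (simp add: times_lend_def Abs_lend_inverse lin_end_comp)
lemma Rep_cscale: "Rep_lend (cscale c T) = (\<lambda>y. bscale c (Rep_lend T y))"
  by (simp add: cscale_lend_def Abs_lend_inverse lin_end_scale)

lemma lend_eqI: "(\<And>y. Rep_lend T y = Rep_lend S y) \<Longrightarrow> T = S"
  by (metis Rep_lend_inject ext)

lemma Rep_lend_pair_eq: "Rep_lend T (a, f) = (fst (Rep_lend T (a, f)), snd (Rep_lend T (a, f)))"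
  by simp

instance lend :: (calg_1, calg) calg_1
proof
  fix a b c :: "('a, 'b) lend" and x y :: complex
  show "a + b + c = a + (b + c)"
    by (rule lend_eqI) (simp add: Rep_plus badd_def add.assoc)
  show "a + b = b + a"
    by (rule lend_eqI) (simp add: Rep_plus badd_def add.commute)
  show "0 + a = a"
    by (rule lend_eqI) (simp add: Rep_plus Rep_zero badd_def)
  show "- a + a = 0"
    by (rule lend_eqI) (simp add: Rep_plus Rep_zero Rep_uminus badd_def)
  show "a - b = a + - b"
    by (rule lend_eqI) (simp add: Rep_plus Rep_minus Rep_uminus)
  show "cscale x (a + b) = cscale x a + cscale x b"
    by (rule lend_eqI) (simp add: Rep_plus Rep_cscale badd_def bscale_def cscale_add_right)
  show "cscale (x + y) a = cscale x a + cscale y a"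
    by (rule lend_eqI) (simp add: Rep_plus Rep_cscale badd_def bscale_def cscale_add_left)
  show "cscale x (cscale y a) = cscale (x * y) a"
    by (rule lend_eqI) (simp add: Rep_cscale bscale_def cscale_cscale)
  show "cscale 1 a = a"
    by (rule lend_eqI) (simp add: Rep_cscale bscale_def cscale_one)
  show "a * b * c = a * (b * c)"
    by (rule lend_eqI) (simp add: Rep_times)
  show "(a + b) * c = a * c + b * c"
    by (rule lend_eqI) (simp add: Rep_times Rep_plus)
  show "a * (b + c) = a * b + a * c"
    by (rule lend_eqI) (simp add: Rep_times Rep_plus Rep_badd)
  show "cscale x a * b = cscale x (a * b)"
    by (rule lend_eqI) (simp add: Rep_times Rep_cscale)
  show "a * cscale x b = cscale x (a * b)"
    by (rule lend_eqI) (simp add: Rep_times Rep_cscale Rep_bscale)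
  show "1 * a = a"
    by (rule lend_eqI) (simp add: Rep_times Rep_one)
  show "a * 1 = a"
    by (rule lend_eqI) (simp add: Rep_times Rep_one)
  show "(0::('a, 'b) lend) \<noteq> 1"
  proof
    assume "(0::('a, 'b) lend) = 1"
    then have "Rep_lend (0::('a, 'b) lend) (1, 0) = Rep_lend 1 (1, 0)" by simp
    then show False by (simp add: Rep_zero Rep_one)
  qed
qed



lemma lprod_Cons: "ys \<noteq> [] \<Longrightarrow> lprod (x # ys) = x * lprod ys"
  by (cases ys) auto

fun tc :: "('a::calg_1 \<times> bool + 'f) list \<Rightarrow> 'a \<times> ('f \<times> 'a) list" where
  "tc [] = (1, [])"
| "tc (Inl (c, i) # xs) = (c * fst (tc xs), snd (tc xs))"
| "tc (Inr g # xs) = (1, (g, fst (tc xs)) # snd (tc xs))"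

definition item :: "'a::calg_1 \<times> bool + 'f::calg \<Rightarrow> 'a \<times> 'f" where
  "item it = (case it of Inl (c, i) \<Rightarrow> (c, 0) | Inr g \<Rightarrow> (0, g))"

locale bimod =
  fixes lm :: "'a::calg_1 \<Rightarrow> 'f::calg \<Rightarrow> 'f" and rm :: "'f \<Rightarrow> 'a \<Rightarrow> 'f"
  assumes bm: "bimod_alg lm rm"
begin

lemma lm_add1: "lm (a + b) f = lm a f + lm b f" using bm by (simp add: bimod_alg_def)
lemma lm_add2: "lm a (f + g) = lm a f + lm a g" using bm by (simp add: bimod_alg_def)
lemma lm_sc1: "lm (cscale c a) f = cscale c (lm a f)" using bm by (simp add: bimod_alg_def)
lemma lm_sc2: "lm a (cscale c f) = cscale c (lm a f)" using bm by (simp add: bimod_alg_def)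
lemma rm_add2: "rm f (a + b) = rm f a + rm f b" using bm by (simp add: bimod_alg_def)
lemma rm_add1: "rm (f + g) a = rm f a + rm g a" using bm by (simp add: bimod_alg_def)
lemma rm_sc2: "rm f (cscale c a) = cscale c (rm f a)" using bm by (simp add: bimod_alg_def)
lemma rm_sc1: "rm (cscale c f) a = cscale c (rm f a)" using bm by (simp add: bimod_alg_def)
lemma lm_mult: "lm (a * b) f = lm a (lm b f)" using bm by (simp add: bimod_alg_def)
lemma rm_mult: "rm f (a * b) = rm (rm f a) b" using bm by (simp add: bimod_alg_def)
lemma lm_rm: "rm (lm a f) b = lm a (rm f b)" using bm by (simp add: bimod_alg_def)
lemma lm_one[simp]: "lm 1 f = f" using bm by (simp add: bimod_alg_def)
lemma rm_one[simp]: "rm f 1 = f" using bm by (simp add: bimod_alg_def)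
lemma lm_times: "lm a (f * g) = lm a f * g" using bm by (simp add: bimod_alg_def)
lemma rm_times: "rm (f * g) a = f * rm g a" using bm by (simp add: bimod_alg_def)
lemma rm_lm: "rm f a * g = f * lm a g" using bm by (simp add: bimod_alg_def)

lemma lm_zero1[simp]: "lm 0 f = 0"
  using lm_add1[of 0 0 f] by simp
lemma lm_zero2[simp]: "lm a 0 = 0"
  using lm_add2[of a 0 0] by simp
lemma rm_zero1[simp]: "rm 0 a = 0"
  using rm_add1[of 0 0 a] by simp
lemma rm_zero2[simp]: "rm f 0 = 0"
  using rm_add2[of f 0 0] by simp

abbreviation "mul \<equiv> bmul lm rm"

lemma bmul_eq: "mul x y = (fst x * fst y, lm (fst x) (snd y) + rm (snd x) (fst y) + snd x * snd y)"
  by (simp add: bmul_def)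

lemma bmul_assoc: "mul (mul x y) z = mul x (mul y z)"
  by (simp add: bmul_eq lm_add2 rm_add1 lm_mult rm_mult lm_rm lm_times rm_times rm_lm
      distrib_left distrib_right mult.assoc algebra_simps)

lemma bmul_badd_left: "mul (badd x y) z = badd (mul x z) (mul y z)"
  by (simp add: bmul_eq badd_def lm_add1 rm_add1 algebra_simps)
lemma bmul_badd_right: "mul x (badd y z) = badd (mul x y) (mul x z)"
  by (simp add: bmul_eq badd_def lm_add2 rm_add2 algebra_simps)
lemma bmul_bscale_left: "mul (bscale c x) z = bscale c (mul x z)"
  by (simp add: bmul_eq bscale_def lm_sc1 rm_sc1 mult_cscale_left cscale_add_right)
lemma bmul_bscale_right: "mul x (bscale c z) = bscale c (mul x z)"
  by (simp add: bmul_eq bscale_def lm_sc2 rm_sc2 mult_cscale_right cscale_add_right)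
lemma bmul_one_left[simp]: "mul (1, 0) z = z"
  by (simp add: bmul_eq)
lemma bmul_one_right[simp]: "mul z (1, 0) = z"
  by (simp add: bmul_eq)

lemma lin_end_mul: "lin_end (mul x)"
  by (simp add: lin_end_def bmul_badd_right bmul_bscale_right)

definition L :: "'a \<times> 'f \<Rightarrow> ('a, 'f) lend" where
  "L x = Abs_lend (mul x)"

lemma Rep_L: "Rep_lend (L x) = mul x"
  by (simp add: L_def Abs_lend_inverse lin_end_mul)

lemma L_mult: "L x * L y = L (mul x y)"
  by (rule lend_eqI) (simp add: Rep_times Rep_L bmul_assoc)
lemma L_add: "L (badd x y) = L x + L y"
  by (rule lend_eqI) (simp add: Rep_plus Rep_L bmul_badd_left)
lemma L_scale: "L (bscale c x) = cscale c (L x)"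
  by (rule lend_eqI) (simp add: Rep_cscale Rep_L bmul_bscale_left)
lemma L_one: "L (1, 0) = 1"
  by (rule lend_eqI) (simp add: Rep_one Rep_L)
lemma L_zero: "L (0, 0) = 0"
  by (rule lend_eqI) (simp add: Rep_zero Rep_L bmul_eq)

lemma L_pow: "L x ^ n = L (bpow lm rm x n)"
  by (induction n) (simp_all add: bpow_def L_one L_mult)

lemma fst_bpow: "fst (bpow lm rm x n) = fst x ^ n"
  by (induction n) (simp_all add: bpow_def bmul_eq)

definition iL :: "'a \<times> bool + 'f \<Rightarrow> ('a, 'f) lend" where
  "iL it = L (item it)"

definition Bval :: "('a \<times> bool + 'f) list \<Rightarrow> 'a \<times> 'f" where
  "Bval xs = foldr (\<lambda>it acc. mul (item it) acc) xs (1, 0)"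

lemma prod_iL: "prod_list (map iL xs) = L (Bval xs)"
  by (induction xs) (simp_all add: Bval_def L_one iL_def L_mult)

lemma Bval_Nil[simp]: "Bval [] = (1, 0)" by (simp add: Bval_def)
lemma Bval_Cons: "Bval (x # xs) = mul (item x) (Bval xs)" by (simp add: Bval_def)

lemma Bval_tc: "Bval xs = (if snd (tc xs) = [] then (fst (tc xs), 0)
     else (0, lm (fst (tc xs)) (lprod (map (\<lambda>(g, c). rm g c) (snd (tc xs))))))"
proof (induction xs rule: tc.induct)
  case 1 then show ?case by simp
next
  case (2 c i xs)
  then show ?case by (auto simp: Bval_Cons item_def bmul_eq lm_mult)
next
  case (3 g xs)
  then show ?case by (auto simp: Bval_Cons item_def bmul_eq rm_lm[symmetric] lprod_Cons)
qed

end



lemma alternating_Nil[simp]: "alternating []" by (simp add: alternating_def)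
lemma alternating_single[simp]: "alternating [x]" by (simp add: alternating_def)
lemma alternating_Cons2: "alternating (x # y # ys) \<longleftrightarrow> x \<noteq> y \<and> alternating (y # ys)"
  unfolding alternating_def
  apply (rule iffI)
   apply (intro conjI allI impI)
    apply (erule allE[of _ 0])
    apply simp
   apply (erule_tac x="Suc k" in allE)
   apply simp
  apply (intro allI impI)
  apply (case_tac k)
   apply auto
  done

definition hdidx :: "('a \<times> bool + 'f) list \<Rightarrow> bool option" where
  "hdidx xs = (case xs of Inl (c, i) # _ \<Rightarrow> Some i | _ \<Rightarrow> None)"

lemma hdidx_simps[simp]: "hdidx [] = None" "hdidx (Inl (c, i) # xs) = Some i" "hdidx (Inr g # xs) = None"
  by (simp_all add: hdidx_def)

fun good :: "('a::calg_1 \<Rightarrow> complex) \<Rightarrow> (bool \<Rightarrow> 'a) \<Rightarrow> 'f set \<Rightarrow> ('a \<times> bool + 'f) list \<Rightarrow> bool" where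
  "good \<phi> a G [] = True"
| "good \<phi> a G (Inl (c, i) # xs) = (c \<in> ualg_gen {a i} \<and> \<phi> c = 0 \<and> good \<phi> a G xs \<and> hdidx xs \<noteq> Some i)"
| "good \<phi> a G (Inr g # xs) = (g \<in> G \<and> good \<phi> a G xs)"

lemma ualg_gen_mono: "x \<in> ualg_gen S \<Longrightarrow> S \<subseteq> T \<Longrightarrow> x \<in> ualg_gen T"
  by (induction rule: ualg_gen.induct) (auto intro: ualg_gen.intros)
lemma alg_gen_mono: "x \<in> alg_gen S \<Longrightarrow> S \<subseteq> T \<Longrightarrow> x \<in> alg_gen T"
  by (induction rule: alg_gen.induct) (auto intro: alg_gen.intros)

locale setting = bimod lm rm for lm :: "'a::calg_1 \<Rightarrow> 'f::calg \<Rightarrow> 'f" and rm +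
  fixes \<phi> :: "'a \<Rightarrow> complex" and \<Phi> :: "'f \<Rightarrow> complex"
    and a1 a2 :: 'a and f1 f2 P :: 'f
  assumes st: "cstate \<phi>" and linPhi: "clinear \<Phi>" and PP: "\<Phi> P \<noteq> 0"
    and free: "free2 \<phi> (ualg_gen {a1}) (ualg_gen {a2})"
    and cam: "cam_indep \<phi> \<Phi> lm rm (ualg_gen {a1, a2}) (alg_gen {P, f1, f2})"
    and bool: "bool_indepB lm rm (phiP \<Phi> lm rm P) (balg_gen lm rm {(0, f1)}) (balg_gen lm rm {(0, f2)})"
begin

abbreviation "A0 \<equiv> ualg_gen {a1, a2}"
abbreviation "F0 \<equiv> alg_gen {P, f1, f2}"
abbreviation "psi \<equiv> phiP \<Phi> lm rm P"

lemma st_lin: "clinear \<phi>" and st_one: "\<phi> 1 = 1" using st by (auto simp: cstate_def)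

lemma P_F0: "P \<in> F0" by (rule alg_gen.base) simp

lemma tc_mem:
  assumes "\<And>c i. Inl (c, i) \<in> set xs \<Longrightarrow> c \<in> A0" "\<And>g. Inr g \<in> set xs \<Longrightarrow> g \<in> F0"
  shows "fst (tc xs) \<in> A0 \<and> (\<forall>(g, c)\<in>set (snd (tc xs)). g \<in> F0 \<and> c \<in> A0)"
  using assms
proof (induction xs rule: tc.induct)
  case 1 then show ?case by (simp add: ualg_gen.one)
next
  case (2 c i xs)
  then show ?case by (auto intro: ualg_gen.mult)
next
  case (3 g xs)
  then show ?case by (auto intro: ualg_gen.one)
qed

lemma cam_use:
  assumes "c0 \<in> A0" "\<forall>(g, c)\<in>set gcs. g \<in> F0 \<and> c \<in> A0"
  shows "\<Phi> (lprod (map (\<lambda>(g, c). rm g c) ((P, c0) # gcs)))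
    = \<phi> c0 * prod_list (map (\<lambda>(g, c). \<phi> c) gcs) * \<Phi> (lprod (P # map fst gcs))"
proof -
  define l where "l = (P, c0) # gcs"
  have l_ok: "\<forall>(g, c)\<in>set l. g \<in> F0 \<and> c \<in> A0" using assms P_F0 by (auto simp: l_def)
  have "\<Phi> (lm 1 (lprod (map (\<lambda>(g, c). rm g c) l)))
      = \<phi> (1 * snd (last l)) * prod_list (map (\<lambda>(g, c). \<phi> c) (butlast l)) * \<Phi> (lprod (map fst l))"
  proof -
    have prem: "l \<noteq> [] \<and> (1::'a) \<in> A0 \<and> (\<forall>(g, c)\<in>set l. g \<in> F0 \<and> c \<in> A0)"
      using l_ok by (simp add: l_def ualg_gen.one)
    show ?thesis using cam prem unfolding cam_indep_def by blast
  qed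
  moreover have "prod_list (map (\<lambda>(g, c). \<phi> c) l) = prod_list (map (\<lambda>(g, c). \<phi> c) (butlast l)) * \<phi> (snd (last l))"
  proof -
    have "l = butlast l @ [last l]" by (simp add: l_def)
    then have "prod_list (map (\<lambda>(g, c). \<phi> c) l) = prod_list (map (\<lambda>(g, c). \<phi> c) (butlast l @ [last l]))"
      by simp
    also have "\<dots> = prod_list (map (\<lambda>(g, c). \<phi> c) (butlast l)) * \<phi> (snd (last l))"
      by (simp add: case_prod_beta)
    finally show ?thesis .
  qed
  ultimately show ?thesis by (simp add: l_def mult.commute mult.left_commute)
qed

lemma snd_mul0P: "snd (mul (0, P) x) = rm P (fst x) + P * snd x"
  by (simp add: bmul_eq)

lemma psi_tc:
  assumes "\<And>c i. Inl (c, i) \<in> set xs \<Longrightarrow> c \<in> A0" "\<And>g. Inr g \<in> set xs \<Longrightarrow> g \<in> F0"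
  shows "psi (Bval xs) = \<phi> (fst (tc xs)) * prod_list (map (\<lambda>(g, c). \<phi> c) (snd (tc xs)))
           * \<Phi> (lprod (P # map fst (snd (tc xs)))) / \<Phi> P"
proof -
  obtain c0 gcs where tcx: "tc xs = (c0, gcs)" by fastforce
  have mem: "c0 \<in> A0" "\<forall>(g, c)\<in>set gcs. g \<in> F0 \<and> c \<in> A0"
  proof -
    have "fst (tc xs) \<in> A0 \<and> (\<forall>(g, c)\<in>set (snd (tc xs)). g \<in> F0 \<and> c \<in> A0)"
      by (rule tc_mem) (use assms in auto)
    then show "c0 \<in> A0" "\<forall>(g, c)\<in>set gcs. g \<in> F0 \<and> c \<in> A0" using tcx by auto
  qed
  have key: "\<Phi> (lprod (map (\<lambda>(g, c). rm g c) ((P, c0) # gcs)))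
    = \<phi> c0 * prod_list (map (\<lambda>(g, c). \<phi> c) gcs) * \<Phi> (lprod (P # map fst gcs))"
    by (rule cam_use[OF mem])
  show ?thesis
  proof (cases "gcs = []")
    case True
    then have "Bval xs = (c0, 0)" using Bval_tc[of xs] tcx by simp
    then show ?thesis using key True tcx by (simp add: phiP_def snd_mul0P)
  next
    case False
    then have "Bval xs = (0, lm c0 (lprod (map (\<lambda>(g, c). rm g c) gcs)))" using Bval_tc[of xs] tcx by simp
    moreover have "P * lm c0 (lprod (map (\<lambda>(g, c). rm g c) gcs)) = lprod (map (\<lambda>(g, c). rm g c) ((P, c0) # gcs))"
      using False by (simp add: rm_lm[symmetric] lprod_Cons)
    ultimately show ?thesis using key tcx by (simp add: phiP_def snd_mul0P)
  qed
qed


definition aa :: "bool \<Rightarrow> 'a" where "aa i = (if i then a1 else a2)"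
definition ff :: "bool \<Rightarrow> 'f" where "ff i = (if i then f1 else f2)"

lemma aa_A0: "c \<in> ualg_gen {aa i} \<Longrightarrow> c \<in> A0"
  by (erule ualg_gen_mono) (auto simp: aa_def)
lemma ff_F0: "ff i \<in> F0"
  by (rule alg_gen.base) (auto simp: ff_def)
lemma f12_F0: "g \<in> {f1, f2} \<Longrightarrow> g \<in> F0"
  by (rule alg_gen.base) auto

definition psiL :: "('a, 'f) lend \<Rightarrow> complex" where
  "psiL T = psi (Rep_lend T (1, 0))"
definition phiL :: "('a, 'f) lend \<Rightarrow> complex" where
  "phiL T = \<phi> (fst (Rep_lend T (1, 0)))"

lemma psi_badd: "psi (badd x y) = psi x + psi y"
  using linPhi by (simp add: phiP_def snd_mul0P badd_def rm_add2 clinear_add algebra_simps add_divide_distrib)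
lemma psi_bscale: "psi (bscale c x) = c * psi x"
  using linPhi by (simp add: phiP_def snd_mul0P bscale_def rm_sc2 mult_cscale_right
      cscale_add_right[symmetric] clinear_scale)
lemma psi_one: "psi (1, 0) = 1"
  using PP by (simp add: phiP_def snd_mul0P)

lemma psiL_state: "clinear psiL" "psiL 1 = 1"
  by (simp_all add: clinear_def psiL_def Rep_plus Rep_cscale Rep_one psi_badd psi_bscale psi_one)
lemma phiL_state: "clinear phiL" "phiL 1 = 1"
  using st by (simp_all add: cstate_def clinear_def phiL_def Rep_plus Rep_cscale Rep_one badd_def bscale_def)

lemma psiL_L: "psiL (L x) = psi x" by (simp add: psiL_def Rep_L)
lemma phiL_L: "phiL (L x) = \<phi> (fst x)" by (simp add: phiL_def Rep_L bmul_eq)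

definition K :: "bool \<Rightarrow> 'a set" where
  "K i = {prod_list (map fst ys) | ys. ys \<noteq> [] \<and> alternating (map snd ys) \<and> snd (hd ys) = i \<and>
           (\<forall>(c, j)\<in>set ys. c \<in> ualg_gen {aa j} \<and> \<phi> c = 0)}"

lemma K_zero: "c \<in> K i \<Longrightarrow> \<phi> c = 0"
proof -
  assume "c \<in> K i"
  then obtain ys where ys: "c = prod_list (map fst ys)" "ys \<noteq> []" "alternating (map snd ys)"
    "\<forall>(c, j)\<in>set ys. c \<in> ualg_gen {aa j} \<and> \<phi> c = 0"
    by (auto simp: K_def)
  have "\<forall>k<length (map fst ys). map fst ys ! k \<in> (if map snd ys ! k then ualg_gen {a1} else ualg_gen {a2})
           \<and> \<phi> (map fst ys ! k) = 0"
  proof (intro allI impI)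
    fix k assume "k < length (map fst ys)"
    then have kl: "k < length ys" by simp
    then have mem: "ys ! k \<in> set ys" by simp
    obtain c' j where cj: "ys ! k = (c', j)" by fastforce
    have "c' \<in> ualg_gen {aa j} \<and> \<phi> c' = 0" using ys(4) mem cj by fastforce
    moreover have "ualg_gen {aa j} = (if j then ualg_gen {a1} else ualg_gen {a2})" by (simp add: aa_def)
    moreover have "map fst ys ! k = c'" "map snd ys ! k = j" using kl cj by simp_all
    ultimately show "map fst ys ! k \<in> (if map snd ys ! k then ualg_gen {a1} else ualg_gen {a2}) \<and> \<phi> (map fst ys ! k) = 0"
      by simp
  qed
  then show ?thesis
    using free[unfolded free2_def, rule_format, of "map fst ys" "map snd ys"] ys(1,2,3) by simp
qed

lemma tc_good:
  assumes "good \<phi> aa G xs"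
  shows "(\<forall>i. hdidx xs = Some i \<longrightarrow> fst (tc xs) \<in> K i) \<and> (hdidx xs = None \<longrightarrow> fst (tc xs) = 1) \<and>
         ((\<exists>c i. Inl (c, i) \<in> set xs) \<longrightarrow> \<phi> (fst (tc xs)) = 0 \<or> (\<exists>(g, c)\<in>set (snd (tc xs)). \<phi> c = 0))"
  using assms
proof (induction xs rule: tc.induct)
  case 1 then show ?case by simp
next
  case (2 c i xs)
  have gx: "good \<phi> aa G xs" and ci: "c \<in> ualg_gen {aa i}" "\<phi> c = 0" and hx: "hdidx xs \<noteq> Some i"
    using "2.prems" by auto
  note IH = "2.IH"[OF gx]
  have "c * fst (tc xs) \<in> K i"
  proof (cases "hdidx xs")
    case None
    then have "fst (tc xs) = 1" using IH by simp
    then show ?thesis using ci unfolding K_def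
      by (intro CollectI exI[of _ "[(c, i)]"]) simp
  next
    case (Some j)
    then have "j \<noteq> i" using hx by auto
    from Some IH have "fst (tc xs) \<in> K j" by simp
    then obtain ys where ys: "fst (tc xs) = prod_list (map fst ys)" "ys \<noteq> []" "alternating (map snd ys)"
      "snd (hd ys) = j" "\<forall>(c, j)\<in>set ys. c \<in> ualg_gen {aa j} \<and> \<phi> c = 0"
      by (auto simp: K_def)
    obtain y ys' where ysc: "ys = y # ys'" using ys(2) by (cases ys) auto
    have "alternating (map snd ((c, i) # ys))"
      using ys(3,4) \<open>j \<noteq> i\<close> by (simp add: ysc alternating_Cons2)
    then show ?thesis using ys ci unfolding K_def
      by (intro CollectI exI[of _ "(c, i) # ys"]) auto
  qed
  then show ?case using K_zero by auto
next
  case (3 g xs)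
  have gx: "good \<phi> aa G xs" using "3.prems" by simp
  note IH = "3.IH"[OF gx]
  have "(\<exists>c i. Inl (c, i) \<in> set xs) \<longrightarrow> \<phi> (fst (tc xs)) = 0 \<or> (\<exists>(g, c)\<in>set (snd (tc xs)). \<phi> c = 0)"
    using IH by blast
  then show ?case by auto
qed

lemma good_mem1: "good \<phi> aa G xs \<Longrightarrow> Inl (c, i) \<in> set xs \<Longrightarrow> c \<in> A0"
  by (induction \<phi> aa G xs rule: good.induct) (auto intro: aa_A0)
lemma good_mem2: "good \<phi> aa G xs \<Longrightarrow> G \<subseteq> F0 \<Longrightarrow> Inr g \<in> set xs \<Longrightarrow> g \<in> F0"
  by (induction \<phi> aa G xs rule: good.induct) auto

lemma good_zero:
  assumes "good \<phi> aa G xs" "G \<subseteq> F0" "Inl (c, i) \<in> set xs"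
  shows "psi (Bval xs) = 0"
proof -
  have "\<phi> (fst (tc xs)) = 0 \<or> (\<exists>(g, c)\<in>set (snd (tc xs)). \<phi> c = 0)"
    using tc_good[OF assms(1)] assms(3) by blast
  then have "\<phi> (fst (tc xs)) = 0 \<or> 0 \<in> set (map (\<lambda>(g, c). \<phi> c) (snd (tc xs)))" by force
  then have "\<phi> (fst (tc xs)) * prod_list (map (\<lambda>(g, c). \<phi> c) (snd (tc xs))) = 0"
    by (auto simp only: prod_list_zero_iff mult_eq_0_iff)
  moreover have "psi (Bval xs) = \<phi> (fst (tc xs)) * prod_list (map (\<lambda>(g, c). \<phi> c) (snd (tc xs)))
           * \<Phi> (lprod (P # map fst (snd (tc xs)))) / \<Phi> P"
    by (rule psi_tc) (auto intro: good_mem1[OF assms(1)] good_mem2[OF assms(1,2)])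
  ultimately show ?thesis by simp
qed

end



inductive_set cspan :: "'x::calg_1 set \<Rightarrow> 'x set" for S where
  zero: "0 \<in> cspan S"
| base: "s \<in> S \<Longrightarrow> s \<in> cspan S"
| add: "x \<in> cspan S \<Longrightarrow> y \<in> cspan S \<Longrightarrow> x + y \<in> cspan S"
| scale: "x \<in> cspan S \<Longrightarrow> cscale c x \<in> cspan S"

lemma cspan_sum: "(\<And>i. i \<in> A \<Longrightarrow> f i \<in> cspan S) \<Longrightarrow> sum f A \<in> cspan S"
proof (induction A rule: infinite_finite_induct)
  case (infinite A) then show ?case by (simp add: cspan.zero)
next
  case empty then show ?case by (simp add: cspan.zero)
next
  case (insert x F)
  have "f x \<in> cspan S" using insert.prems by blast
  moreover have "sum f F \<in> cspan S" using insert by blast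
  moreover have "sum f (insert x F) = f x + sum f F" using insert.hyps by simp
  ultimately show ?case by (metis cspan.add)
qed

lemma cspan_mono: "x \<in> cspan S \<Longrightarrow> S \<subseteq> T \<Longrightarrow> x \<in> cspan T"
  by (induction rule: cspan.induct) (auto intro: cspan.intros)

lemma prod_list_update_zero:
  "k < length xs \<Longrightarrow> prod_list (xs[k := 0]) = (0::'a::ring_1)"
proof (induction xs arbitrary: k)
  case Nil then show ?case by simp
next
  case (Cons y ys) then show ?case by (cases k) auto
qed

lemma prod_list_update_cmult:
  "k < length xs \<Longrightarrow> prod_list (xs[k := c * a]) = c * prod_list (xs[k := (a::'a::comm_ring_1)])"
proof (induction xs arbitrary: k)
  case Nil then show ?case by simp
next
  case (Cons y ys) then show ?case by (cases k) (auto simp: algebra_simps)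
qed

lemma multilin_ext:
  fixes \<chi> :: "'x::calg_1 \<Rightarrow> complex"
  assumes lin: "clinear \<chi>"
    and gen: "\<And>Ts. length Ts = length idx \<Longrightarrow> (\<forall>k<length Ts. Ts ! k \<in> G (idx ! k)) \<Longrightarrow>
                 \<chi> (prod_list Ts) = prod_list (map \<chi> Ts)"
    and len: "length Ts = length idx"
    and mem: "\<forall>k<length Ts. Ts ! k \<in> cspan (G (idx ! k))"
  shows "\<chi> (prod_list Ts) = prod_list (map \<chi> Ts)"
proof -
  have claim: "\<forall>Ts. length Ts = length idx \<longrightarrow>
      (\<forall>k<length Ts. (k < m \<longrightarrow> Ts ! k \<in> cspan (G (idx ! k))) \<and> (m \<le> k \<longrightarrow> Ts ! k \<in> G (idx ! k))) \<longrightarrow>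
      \<chi> (prod_list Ts) = prod_list (map \<chi> Ts)" if "m \<le> length idx" for m
    using that
  proof (induction m)
    case 0 then show ?case using gen by auto
  next
    case (Suc m)
    show ?case
    proof (intro allI impI)
      fix Ts :: "'x list"
      assume l: "length Ts = length idx"
        and h: "\<forall>k<length Ts. (k < Suc m \<longrightarrow> Ts ! k \<in> cspan (G (idx ! k))) \<and> (Suc m \<le> k \<longrightarrow> Ts ! k \<in> G (idx ! k))"
      have ml: "m < length Ts" using Suc.prems l by simp
      have P: "\<chi> (prod_list (Ts[m := T])) = prod_list (map \<chi> (Ts[m := T]))"
        if "T \<in> cspan (G (idx ! m))" for T
        using that
      proof (induction rule: cspan.induct)
        case zero
        have "\<chi> (prod_list (Ts[m := 0])) = 0" using ml lin by (simp add: prod_list_update_zero clinear_zero)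
        moreover have "prod_list (map \<chi> (Ts[m := 0])) = 0"
          using ml lin by (simp add: map_update clinear_zero prod_list_update_zero)
        ultimately show ?case by simp
      next
        case (base s)
        have "\<forall>k<length (Ts[m := s]). (k < m \<longrightarrow> Ts[m := s] ! k \<in> cspan (G (idx ! k))) \<and>
                (m \<le> k \<longrightarrow> Ts[m := s] ! k \<in> G (idx ! k))"
          using h base by (auto simp: nth_list_update)
        then show ?case using Suc.IH Suc.prems l by simp
      next
        case (add x y)
        then show ?case using ml lin
          by (simp add: prod_list_update_add map_update clinear_add)
      next
        case (scale x c)
        then show ?case using ml lin
          by (simp add: prod_list_update_scale map_update clinear_scale prod_list_update_cmult)
      qed
      have "Ts ! m \<in> cspan (G (idx ! m))" using h ml by simp
      from P[OF this] show "\<chi> (prod_list Ts) = prod_list (map \<chi> Ts)" by simp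
    qed
  qed
  have "\<forall>k<length Ts. (k < length idx \<longrightarrow> Ts ! k \<in> cspan (G (idx ! k))) \<and> (length idx \<le> k \<longrightarrow> Ts ! k \<in> G (idx ! k))"
    using mem len by auto
  then show ?thesis using claim[of "length idx"] len by blast
qed

lemma hdidx_append: "xs \<noteq> [] \<Longrightarrow> hdidx (xs @ ys) = hdidx xs"
  by (cases xs) (auto simp: hdidx_def split: list.splits sum.splits prod.splits)

lemma good_append:
  "good \<phi> a G xs \<Longrightarrow> good \<phi> a G ys \<Longrightarrow> (\<And>c i. xs \<noteq> [] \<Longrightarrow> last xs = Inl (c, i) \<Longrightarrow> hdidx ys \<noteq> Some i)
   \<Longrightarrow> good \<phi> a G (xs @ ys)"
proof (induction \<phi> a G xs rule: good.induct)
  case (1 \<phi> a G) then show ?case by simp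
next
  case (2 \<phi> a G c i xs)
  show ?case
  proof (cases "xs = []")
    case True then show ?thesis using "2.prems" by simp
  next
    case False then show ?thesis using "2.prems" "2.IH" by (simp add: hdidx_append)
  qed
next
  case (3 \<phi> a G g xs)
  show ?case
  proof (cases "xs = []")
    case True then show ?thesis using "3.prems" by simp
  next
    case False then show ?thesis using "3.prems" "3.IH" by simp
  qed
qed

lemma cscale_neg_one: "cscale (-1) x = - (x::'a::cvec)"
proof -
  have "cscale (1 + -1) x = cscale 1 x + cscale (-1) x" by (rule cscale_add_left)
  then have "x + cscale (-1) x = 0" by (simp add: cscale_one)
  then show ?thesis by (metis minus_unique)
qed

lemma ualg_gen_diff: "x \<in> ualg_gen S \<Longrightarrow> y \<in> ualg_gen S \<Longrightarrow> x - y \<in> ualg_gen S"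
proof -
  assume "x \<in> ualg_gen S" "y \<in> ualg_gen S"
  then have "x + cscale (-1) y \<in> ualg_gen S" by (intro ualg_gen.add ualg_gen.scale)
  then show ?thesis by (simp add: cscale_neg_one)
qed

lemma prod_list_map_concat: "prod_list (map f (concat ss)) = prod_list (map (\<lambda>s. prod_list (map f s)) ss)"
  by (induction ss) auto

context setting
begin

definition seg :: "bool \<Rightarrow> ('a \<times> bool + 'f) list \<Rightarrow> bool" where
  "seg i xs \<longleftrightarrow> xs \<noteq> [] \<and> good \<phi> aa {f1, f2} xs \<and> (\<forall>c j. Inl (c, j) \<in> set xs \<longrightarrow> j = i) \<and>
     (\<forall>g. Inr g \<in> set xs \<longrightarrow> g = ff i)"

lemma good_concat:
  assumes "alternating (map fst zs)" "\<forall>(i, s)\<in>set zs. seg i s"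
  shows "good \<phi> aa {f1, f2} (concat (map snd zs))"
  using assms
proof (induction zs)
  case Nil then show ?case by simp
next
  case (Cons z zs)
  obtain i s where z: "z = (i, s)" by fastforce
  have alt: "alternating (map fst zs)"
    using Cons.prems(1) by (cases zs) (auto simp: alternating_Cons2)
  have IH: "good \<phi> aa {f1, f2} (concat (map snd zs))" using Cons alt by simp
  have ss: "seg i s" using Cons.prems z by simp
  show ?case
  proof (simp add: z, rule good_append)
    show "good \<phi> aa {f1, f2} s" using ss by (simp add: seg_def)
    show "good \<phi> aa {f1, f2} (concat (map snd zs))" by (rule IH)
    fix c k assume sne: "s \<noteq> []" and last: "last s = Inl (c, k)"
    have "Inl (c, k) \<in> set s" using sne last by (metis last_in_set)
    then have ki: "k = i" using ss by (simp add: seg_def)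
    show "hdidx (concat (map snd zs)) \<noteq> Some k"
    proof (cases zs)
      case Nil then show ?thesis by simp
    next
      case (Cons z' zs')
      obtain i' s' where z': "z' = (i', s')" by fastforce
      have ss': "seg i' s'" using Cons.prems Cons z' by simp
      then have s'ne: "s' \<noteq> []" by (simp add: seg_def)
      have ii: "i' \<noteq> i" using Cons.prems(1) Cons z' z by (simp add: alternating_Cons2)
      have "hdidx (concat (map snd zs)) = hdidx s'" using Cons z' s'ne by (simp add: hdidx_append)
      moreover have "hdidx s' \<noteq> Some k"
      proof
        assume "hdidx s' = Some k"
        then obtain c' rest where "s' = Inl (c', k) # rest"
          by (cases s' rule: list.exhaust) (auto simp: hdidx_def split: sum.splits prod.splits)
        then have "k = i'" using ss' by (simp add: seg_def)
        then show False using ii ki by simp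
      qed
      ultimately show ?thesis by simp
    qed
  qed
qed

lemma Bval_append: "Bval (xs @ ys) = mul (Bval xs) (Bval ys)"
  by (induction xs) (simp_all add: Bval_Cons bmul_assoc)

lemma Bval_concat: "Bval (concat ls) = bprod_list lm rm (map Bval ls)"
  by (induction ls) (simp_all add: bprod_list_def Bval_append)

lemma Bval_Inr: "gs \<noteq> [] \<Longrightarrow> Bval (map Inr gs) = (0, lprod gs)"
proof (induction gs)
  case Nil then show ?case by simp
next
  case (Cons g gs)
  then show ?case by (cases "gs = []") (auto simp: Bval_Cons item_def bmul_eq lprod_Cons)
qed

lemma lprod_balg: "gs \<noteq> [] \<Longrightarrow> (\<forall>g\<in>set gs. g = h) \<Longrightarrow> (0, lprod gs) \<in> balg_gen lm rm {(0, h)}"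
proof (induction gs)
  case Nil then show ?case by simp
next
  case (Cons g gs)
  show ?case
  proof (cases "gs = []")
    case True then show ?thesis using Cons by (auto intro: balg_gen.base)
  next
    case False
    have "(0, g) \<in> balg_gen lm rm {(0, h)}" using Cons by (auto intro: balg_gen.base)
    moreover have "(0, lprod gs) \<in> balg_gen lm rm {(0, h)}" using Cons False by simp
    ultimately have "mul (0, g) (0, lprod gs) \<in> balg_gen lm rm {(0, h)}" by (rule balg_gen.mult)
    then show ?thesis using False by (simp add: bmul_eq lprod_Cons)
  qed
qed

definition gsl :: "('a \<times> bool + 'f) list \<Rightarrow> 'f list" where
  "gsl s = map (\<lambda>it. case it of Inr g \<Rightarrow> g | Inl _ \<Rightarrow> 0) s"

lemma pure_Inr: "(\<forall>c j. Inl (c, j) \<notin> set s) \<Longrightarrow> s = map Inr (gsl s)"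
proof (induction s)
  case Nil then show ?case by (simp add: gsl_def)
next
  case (Cons x s)
  then show ?case by (cases x) (auto simp: gsl_def)
qed

lemma gsl_mem: "(\<forall>c j. Inl (c, j) \<notin> set s) \<Longrightarrow> g \<in> set (gsl s) \<Longrightarrow> Inr g \<in> set s"
proof (induction s)
  case Nil then show ?case by (simp add: gsl_def)
next
  case (Cons x s)
  then show ?case by (cases x) (auto simp: gsl_def)
qed

lemma cgen:
  assumes alt: "alternating (map fst zs)" and segs: "\<forall>(i, s)\<in>set zs. seg i s"
  shows "psi (Bval (concat (map snd zs))) = prod_list (map (\<lambda>(i, s). psi (Bval s)) zs)"
proof (cases "\<exists>(i, s)\<in>set zs. \<exists>c j. Inl (c, j) \<in> set s")
  case True
  then obtain i s c j where ics: "(i, s) \<in> set zs" "Inl (c, j) \<in> set s" by blast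
  have sg: "seg i s" using segs ics by auto
  have F: "{f1, f2} \<subseteq> F0" using f12_F0 by blast
  have "psi (Bval s) = 0" using good_zero[OF _ F ics(2)] sg by (simp add: seg_def)
  then have "0 \<in> set (map (\<lambda>(i, s). psi (Bval s)) zs)" using ics(1) by force
  then have r: "prod_list (map (\<lambda>(i, s). psi (Bval s)) zs) = 0" by (simp add: prod_list_zero_iff)
  have "Inl (c, j) \<in> set (concat (map snd zs))" using ics by force
  then have "psi (Bval (concat (map snd zs))) = 0"
    using good_zero[OF good_concat[OF alt segs] F] by blast
  then show ?thesis using r by simp
next
  case False
  then have noinl: "\<forall>(i, s)\<in>set zs. \<forall>c j. Inl (c, j) \<notin> set s" by blast
  show ?thesis
  proof (cases "zs = []")
    case True then show ?thesis by (simp add: psi_one)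
  next
    case nz: False
    have bv: "Bval s = (0, lprod (gsl s))" if "(i, s) \<in> set zs" for i s
    proof -
      have "s \<noteq> []" using segs that by (auto simp: seg_def)
      then have ne: "gsl s \<noteq> []" by (simp add: gsl_def)
      have e: "s = map Inr (gsl s)" using noinl that pure_Inr by blast
      from e have "Bval s = Bval (map Inr (gsl s))" by (rule arg_cong)
      also have "\<dots> = (0, lprod (gsl s))" using ne by (rule Bval_Inr)
      finally show ?thesis .
    qed
    have mem: "Bval s \<in> balg_gen lm rm {(0, ff i)}" if "(i, s) \<in> set zs" for i s
    proof -
      have sg: "seg i s" using segs that by auto
      have "s \<noteq> []" using sg by (simp add: seg_def)
      then have ne: "gsl s \<noteq> []" by (simp add: gsl_def)
      have "\<forall>g\<in>set (gsl s). g = ff i"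
      proof
        fix g assume "g \<in> set (gsl s)"
        moreover have "\<forall>c j. Inl (c, j) \<notin> set s" using noinl that by blast
        ultimately have "Inr g \<in> set s" using gsl_mem by blast
        then show "g = ff i" using sg by (simp add: seg_def)
      qed
      then show ?thesis using bv[OF that] lprod_balg[OF ne] by simp
    qed
    define xs where "xs = map (\<lambda>(i, s). Bval s) zs"
    have "\<forall>k<length xs. xs ! k \<in> (if map fst zs ! k then balg_gen lm rm {(0, f1)} else balg_gen lm rm {(0, f2)})"
    proof (intro allI impI)
      fix k assume "k < length xs"
      then have kl: "k < length zs" by (simp add: xs_def)
      obtain i s where zk: "zs ! k = (i, s)" by fastforce
      have "(i, s) \<in> set zs" using kl zk by (metis nth_mem)
      from mem[OF this] show "xs ! k \<in> (if map fst zs ! k then balg_gen lm rm {(0, f1)} else balg_gen lm rm {(0, f2)})"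
        using kl zk by (cases i) (simp_all add: xs_def ff_def)
    qed
    then have "psi (bprod_list lm rm xs) = prod_list (map psi xs)"
    proof -
      have "xs \<noteq> [] \<and> length (map fst zs) = length xs \<and> alternating (map fst zs)"
        using nz alt by (simp add: xs_def)
      with \<open>\<forall>k<length xs. _\<close> show ?thesis
        using bool unfolding bool_indepB_def by blast
    qed
    moreover have "Bval (concat (map snd zs)) = bprod_list lm rm xs"
    proof -
      have e: "map Bval (map snd zs) = map (\<lambda>(i, s). Bval s) zs" by (induction zs) auto
      show ?thesis by (simp only: Bval_concat e xs_def)
    qed
    moreover have "map psi xs = map (\<lambda>(i, s). psi (Bval s)) zs"
      by (simp add: xs_def case_prod_beta)
    ultimately show ?thesis by simp
  qed
qed


definition Lb :: "bool \<Rightarrow> ('a, 'f) lend" where "Lb i = L (aa i, ff i)"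
definition SegL :: "bool \<Rightarrow> ('a, 'f) lend set" where
  "SegL i = {prod_list (map iL s) | s. seg i s}"
abbreviation "SU i \<equiv> cspan (insert 1 (SegL i))"

definition cent :: "'a \<Rightarrow> 'a" where "cent c = c - cscale (\<phi> c) 1"

lemma cent_phi: "\<phi> (cent c) = 0"
  using st_lin st_one by (simp add: cent_def clinear_diff clinear_scale)

lemma cent_mem: "c \<in> ualg_gen {aa i} \<Longrightarrow> cent c \<in> ualg_gen {aa i}"
  unfolding cent_def by (intro ualg_gen_diff ualg_gen.scale ualg_gen.one)

lemma iL_Inl: "iL (Inl (x, i)) = L (x, 0)" by (simp add: iL_def item_def)
lemma iL_Inr: "iL (Inr g) = L (0, g)" by (simp add: iL_def item_def)

lemma L_Acomp: "L (c, 0) = iL (Inl (cent c, i)) + cscale (\<phi> c) 1"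
proof -
  have "(c, 0) = badd (cent c, 0) (bscale (\<phi> c) (1, 0))"
    by (simp add: badd_def bscale_def cent_def)
  then have "L (c, 0) = L (badd (cent c, 0) (bscale (\<phi> c) (1, 0)))" by (rule arg_cong)
  also have "\<dots> = L (cent c, 0) + cscale (\<phi> c) (L (1, 0))"
    by (simp only: L_add L_scale)
  finally have "L (c, 0) = L (cent c, 0) + cscale (\<phi> c) (L (1, 0))" .
  then show ?thesis by (simp add: iL_Inl L_one)
qed

lemma SU_one: "1 \<in> SU i" by (intro cspan.base) simp
lemma SU_seg: "seg i s \<Longrightarrow> prod_list (map iL s) \<in> SU i"
  by (intro cspan.base) (auto simp: SegL_def)

lemma SU_leftmult:
  assumes base: "\<And>T. T \<in> insert 1 (SegL i) \<Longrightarrow> M * T \<in> SU i"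
  shows "T \<in> SU i \<Longrightarrow> M * T \<in> SU i"
proof (induction rule: cspan.induct)
  case zero then show ?case by (simp add: cspan.zero)
next
  case (base s) then show ?case by (rule assms)
next
  case (add x y) then show ?case by (simp add: distrib_left cspan.add)
next
  case (scale x c) then show ?case by (simp add: mult_cscale_right cspan.scale)
qed

lemma seg_Cons_Inl:
  assumes "c \<in> ualg_gen {aa i}" "\<phi> c = 0" "s = [] \<or> seg i s" "hdidx s \<noteq> Some i"
  shows "seg i (Inl (c, i) # s)"
  using assms by (auto simp: seg_def)

lemma seg_Cons_Inr:
  assumes "s = [] \<or> seg i s"
  shows "seg i (Inr (ff i) # s)"
proof -
  have "ff i \<in> {f1, f2}" by (cases i) (simp_all add: ff_def)
  then show ?thesis using assms by (auto simp: seg_def)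
qed

lemma SU_A:
  assumes c: "c \<in> ualg_gen {aa i}"
  shows "T \<in> SU i \<Longrightarrow> L (c, 0) * T \<in> SU i"
proof (rule SU_leftmult)
  fix T assume "T \<in> insert 1 (SegL i)"
  then consider "T = 1" | s where "seg i s" "T = prod_list (map iL s)" by (auto simp: SegL_def)
  then show "L (c, 0) * T \<in> SU i"
  proof cases
    case 1
    have "seg i [Inl (cent c, i)]" using cent_mem[OF c] cent_phi by (intro seg_Cons_Inl) auto
    then have "prod_list (map iL [Inl (cent c, i)]) \<in> SU i" by (rule SU_seg)
    then have "iL (Inl (cent c, i)) + cscale (\<phi> c) 1 \<in> SU i"
      by (simp add: cspan.add cspan.scale SU_one)
    then show ?thesis using 1 L_Acomp[of c i] by simp
  next
    case 2
    then obtain it s' where s: "s = it # s'" by (cases s) (auto simp: seg_def)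
    show ?thesis
    proof (cases it)
      case (Inr g)
      have "hdidx s = None" using s Inr by simp
      then have "seg i (Inl (cent c, i) # s)" using cent_mem[OF c] cent_phi 2 by (intro seg_Cons_Inl) auto
      then have "prod_list (map iL (Inl (cent c, i) # s)) \<in> SU i" by (rule SU_seg)
      moreover have "L (c, 0) * T = prod_list (map iL (Inl (cent c, i) # s)) + cscale (\<phi> c) T"
        using 2 L_Acomp[of c i] by (simp add: distrib_right mult_cscale_left)
      moreover have "cscale (\<phi> c) T \<in> SU i" using SU_seg[OF 2(1)] 2(2) by (simp add: cspan.scale)
      ultimately show ?thesis by (simp add: cspan.add)
    next
      case (Inl cj)
      obtain c' j where cj: "cj = (c', j)" by fastforce
      have ji: "j = i" using 2 s Inl cj by (auto simp: seg_def)
      have g: "good \<phi> aa {f1, f2} (Inl (c', i) # s')" using 2 s Inl cj ji by (simp add: seg_def)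
      then have c': "c' \<in> ualg_gen {aa i}" and hs: "hdidx s' \<noteq> Some i" and gs': "good \<phi> aa {f1, f2} s'" by auto
      have cc: "c * c' \<in> ualg_gen {aa i}" using c c' by (rule ualg_gen.mult)
      have s'seg: "s' = [] \<or> seg i s'" using 2 s gs' by (auto simp: seg_def)
      have "seg i (Inl (cent (c * c'), i) # s')"
        using cent_mem[OF cc] cent_phi s'seg hs by (intro seg_Cons_Inl) auto
      then have A: "prod_list (map iL (Inl (cent (c * c'), i) # s')) \<in> SU i" by (rule SU_seg)
      have B: "prod_list (map iL s') \<in> SU i"
        using s'seg SU_one SU_seg by auto
      have "L (c, 0) * T = L (c * c', 0) * prod_list (map iL s')"
        using 2 s Inl cj ji by (simp add: iL_Inl mult.assoc[symmetric] L_mult bmul_eq)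
      also have "\<dots> = prod_list (map iL (Inl (cent (c * c'), i) # s')) + cscale (\<phi> (c * c')) (prod_list (map iL s'))"
        using L_Acomp[of "c * c'" i] by (simp add: distrib_right mult_cscale_left)
      finally show ?thesis using A B by (simp add: cspan.add cspan.scale)
    qed
  qed
qed

lemma SU_F:
  shows "T \<in> SU i \<Longrightarrow> L (0, ff i) * T \<in> SU i"
proof (rule SU_leftmult)
  fix T assume "T \<in> insert 1 (SegL i)"
  then consider "T = 1" | s where "seg i s" "T = prod_list (map iL s)" by (auto simp: SegL_def)
  then show "L (0, ff i) * T \<in> SU i"
  proof cases
    case 1
    have "seg i [Inr (ff i)]" by (intro seg_Cons_Inr) simp
    then show ?thesis using 1 SU_seg by (fastforce simp: iL_Inr)
  next
    case 2
    have "seg i (Inr (ff i) # s)" using 2 by (intro seg_Cons_Inr) simp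
    then show ?thesis using 2 SU_seg by (fastforce simp: iL_Inr)
  qed
qed

lemma Lb_split: "Lb i = L (aa i, 0) + L (0, ff i)"
proof -
  have "(aa i, ff i) = badd (aa i, 0) (0, ff i)" by (simp add: badd_def)
  then show ?thesis by (simp add: Lb_def L_add)
qed

lemma SU_Lb: "T \<in> SU i \<Longrightarrow> Lb i * T \<in> SU i"
proof -
  assume T: "T \<in> SU i"
  have "aa i \<in> ualg_gen {aa i}" by (rule ualg_gen.base) simp
  then have "L (aa i, 0) * T \<in> SU i" using SU_A T by blast
  moreover have "L (0, ff i) * T \<in> SU i" using SU_F T by blast
  ultimately show ?thesis by (simp add: Lb_split distrib_right cspan.add)
qed

lemma SU_pow: "Lb i ^ k \<in> SU i"
  by (induction k) (simp_all add: SU_one SU_Lb)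

lemma SU_peval: "peval p (Lb i) \<in> SU i"
  unfolding peval_def by (intro cspan_sum cspan.scale SU_pow)

lemma SU_split: "T \<in> SU i \<Longrightarrow> \<exists>T' c. T' \<in> cspan (SegL i) \<and> T = T' + cscale c 1"
proof (induction rule: cspan.induct)
  case zero then show ?case by (intro exI[of _ 0]) (simp add: cspan.zero)
next
  case (base s)
  then consider "s = 1" | "s \<in> SegL i" by blast
  then show ?case
  proof cases
    case 2 then show ?thesis by (intro exI[of _ s] exI[of _ 0]) (simp add: cspan.base)
  next
    case 1 then show ?thesis by (intro exI[of _ 0] exI[of _ 1]) (simp add: cspan.zero cscale_one)
  qed
next
  case (add x y)
  then obtain x' c y' d where "x' \<in> cspan (SegL i)" "x = x' + cscale c 1" "y' \<in> cspan (SegL i)" "y = y' + cscale d 1"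
    by blast
  then show ?case by (intro exI[of _ "x' + y'"] exI[of _ "c + d"]) (simp add: cspan.add cscale_add_left algebra_simps)
next
  case (scale x c)
  then obtain x' d where "x' \<in> cspan (SegL i)" "x = x' + cscale d 1" by blast
  then show ?case by (intro exI[of _ "cscale c x'"] exI[of _ "c * d"]) (simp add: cspan.scale cscale_add_right cscale_cscale)
qed

lemma phiL_seg: "seg i s \<Longrightarrow> phiL (prod_list (map iL s)) = 0"
proof -
  assume sg: "seg i s"
  have "phiL (prod_list (map iL s)) = \<phi> (fst (Bval s))" by (simp add: prod_iL phiL_L)
  also have "\<dots> = 0"
  proof (cases "snd (tc s) = []")
    case True
    obtain it s' where s: "s = it # s'" using sg by (cases s) (auto simp: seg_def)
    obtain c j where it: "it = Inl (c, j)" using True s by (cases it) auto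
    have gd: "good \<phi> aa {f1, f2} s" using sg by (simp add: seg_def)
    have "hdidx s = Some j" using s it by simp
    then have "fst (tc s) \<in> K j" using tc_good[OF gd] by blast
    then show ?thesis using True Bval_tc[of s] K_zero by simp
  next
    case False
    then show ?thesis using Bval_tc[of s] st_lin by (simp add: clinear_zero)
  qed
  finally show ?thesis .
qed

lemma phiL_cspan: "T \<in> cspan (SegL i) \<Longrightarrow> phiL T = 0"
  by (induction rule: cspan.induct)
     (auto simp: SegL_def phiL_seg clinear_zero clinear_add clinear_scale phiL_state)

lemma centered_span:
  assumes "phiL (peval p (Lb i)) = 0"
  shows "peval p (Lb i) \<in> cspan (SegL i)"
proof -
  obtain T' c where T': "T' \<in> cspan (SegL i)" "peval p (Lb i) = T' + cscale c 1"
    using SU_split[OF SU_peval] by blast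
  have "phiL (peval p (Lb i)) = c"
    using T' phiL_cspan[OF T'(1)] phiL_state by (simp add: clinear_add clinear_scale)
  then have "c = 0" using assms by simp
  then show ?thesis using T' by simp
qed


lemma psiL_seg: "psiL (prod_list (map iL s)) = psi (Bval s)"
  by (simp add: prod_iL psiL_L)

lemma gen_SegL:
  assumes alt: "alternating idx" and len: "length Ts = length idx"
    and mem: "\<forall>k<length Ts. Ts ! k \<in> SegL (idx ! k)"
  shows "psiL (prod_list Ts) = prod_list (map psiL Ts)"
proof -
  define n where "n = length Ts"
  define ss where "ss = map (\<lambda>k. SOME s. seg (idx ! k) s \<and> Ts ! k = prod_list (map iL s)) [0..<n]"
  have ssk: "seg (idx ! k) (ss ! k) \<and> Ts ! k = prod_list (map iL (ss ! k))" if "k < n" for k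
  proof -
    have "\<exists>s. seg (idx ! k) s \<and> Ts ! k = prod_list (map iL s)"
      using mem that by (auto simp: SegL_def n_def)
    then have "seg (idx ! k) (SOME s. seg (idx ! k) s \<and> Ts ! k = prod_list (map iL s)) \<and>
               Ts ! k = prod_list (map iL (SOME s. seg (idx ! k) s \<and> Ts ! k = prod_list (map iL s)))"
      by (rule someI_ex)
    then show ?thesis using that by (simp add: ss_def)
  qed
  have lss: "length ss = n" by (simp add: ss_def)
  define zs where "zs = zip idx ss"
  have mfz: "map fst zs = idx" using len lss by (simp add: zs_def n_def)
  have msz: "map snd zs = ss" using len lss by (simp add: zs_def n_def)
  have segs: "\<forall>(i, s)\<in>set zs. seg i s"
  proof
    fix z assume "z \<in> set zs"
    then obtain k where k: "k < length zs" "z = zs ! k" by (metis in_set_conv_nth)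
    then have kn: "k < n" using len lss by (simp add: zs_def n_def)
    then have "z = (idx ! k, ss ! k)" using k len lss by (simp add: zs_def n_def)
    then show "case z of (i, s) \<Rightarrow> seg i s" using ssk[OF kn] by simp
  qed
  have TS: "Ts = map (\<lambda>s. prod_list (map iL s)) ss"
    by (rule nth_equalityI) (simp_all add: lss n_def ssk)
  have "psiL (prod_list Ts) = psiL (prod_list (map iL (concat ss)))"
    by (simp add: TS prod_list_map_concat)
  also have "\<dots> = psi (Bval (concat (map snd zs)))" by (simp add: psiL_seg msz)
  also have "\<dots> = prod_list (map (\<lambda>(i, s). psi (Bval s)) zs)"
    using cgen[of zs] alt segs mfz by simp
  also have "map (\<lambda>(i, s). psi (Bval s)) zs = map (\<lambda>s. psi (Bval s)) ss"
    by (simp add: msz[symmetric] case_prod_beta)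
  also have "\<dots> = map psiL Ts" by (simp add: TS psiL_seg)
  finally show ?thesis .
qed

lemma cfreeL:
  assumes "alternating (map fst zs)" "\<forall>(i, p)\<in>set zs. phiL (peval p (Lb i)) = 0"
  shows "psiL (E Lb zs) = prod_list (map (\<lambda>(i, p). psiL (peval p (Lb i))) zs)"
proof -
  define Ts where "Ts = map (\<lambda>(i, p). peval p (Lb i)) zs"
  have h1: "psiL (prod_list Ts) = prod_list (map psiL Ts)"
  proof (rule multilin_ext[where idx = "map fst zs" and G = SegL])
    show "clinear psiL" by (rule psiL_state)
    show "length Ts = length (map fst zs)" by (simp add: Ts_def)
    show "\<forall>k<length Ts. Ts ! k \<in> cspan (SegL (map fst zs ! k))"
    proof (intro allI impI)
      fix k assume k: "k < length Ts"
      obtain i p where zk: "zs ! k = (i, p)" by fastforce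
      have "(i, p) \<in> set zs" using k zk by (metis Ts_def length_map nth_mem)
      then have "phiL (peval p (Lb i)) = 0" using assms(2) by auto
      then show "Ts ! k \<in> cspan (SegL (map fst zs ! k))"
        using centered_span k zk by (simp add: Ts_def)
    qed
    fix Ts' :: "('a, 'f) lend list"
    assume "length Ts' = length (map fst zs)" "\<forall>k<length Ts'. Ts' ! k \<in> SegL (map fst zs ! k)"
    then show "psiL (prod_list Ts') = prod_list (map psiL Ts')"
      using gen_SegL assms(1) by blast
  qed
  have h2: "map psiL Ts = map (\<lambda>(i, p). psiL (peval p (Lb i))) zs"
    by (simp add: Ts_def case_prod_beta)
  have e1: "E Lb zs = prod_list Ts" by (simp add: E_def Ts_def)
  show ?thesis by (simp only: e1 h1 h2)
qed

end



fun dec :: "bool list \<Rightarrow> nat \<times> nat list" where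
  "dec [] = (0, [])"
| "dec (True # w) = (Suc (fst (dec w)), snd (dec w))"
| "dec (False # w) = (0, fst (dec w) # snd (dec w))"

definition word :: "'x::monoid_mult \<Rightarrow> 'x \<Rightarrow> bool list \<Rightarrow> 'x" where
  "word y1 y2 w = prod_list (map (\<lambda>b. if b then y1 else y2) w)"

lemma word_dec: "word y1 y2 w = y1 ^ fst (dec w) * prod_list (map (\<lambda>r. y2 * y1 ^ r) (snd (dec w)))"
  by (induction w rule: dec.induct) (simp_all add: word_def mult.assoc)

lemma prod_list_map_const: "prod_list (map (\<lambda>_. c) xs) = (c::'x::monoid_mult) ^ length xs"
  by (induction xs) auto

lemma mono_word:
  fixes \<omega> :: "'x::calg_1 \<Rightarrow> complex"
  assumes st: "cstate \<omega>" and mi: "mono_indep \<omega> (alg_gen {y2}) (ualg_gen {y1})"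
  shows "\<omega> (word y1 y2 w) = \<omega> (y1 ^ fst (dec w)) * \<omega> (y2 ^ length (snd (dec w)))
           * prod_list (map (\<lambda>r. \<omega> (y1 ^ r)) (snd (dec w)))"
proof (cases "snd (dec w) = []")
  case True
  then show ?thesis using st by (simp add: word_dec cstate_def)
next
  case False
  define xzs where "xzs = map (\<lambda>r. (y2, y1 ^ r)) (snd (dec w))"
  have z0: "y1 ^ fst (dec w) \<in> ualg_gen {y1}" by (intro ualg_gen_pow ualg_gen.base) simp
  have xz: "\<forall>(x, z)\<in>set xzs. x \<in> alg_gen {y2} \<and> z \<in> ualg_gen {y1}"
    by (auto simp: xzs_def intro: alg_gen.base ualg_gen_pow ualg_gen.base)
  have ne: "xzs \<noteq> []" using False by (simp add: xzs_def)
  have "\<omega> (y1 ^ fst (dec w) * prod_list (map (\<lambda>(x, z). x * z) xzs))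
      = \<omega> (prod_list (map fst xzs)) * \<omega> (y1 ^ fst (dec w)) * prod_list (map (\<lambda>(x, z). \<omega> z) xzs)"
  proof -
    have h: "\<forall>z0 xzs. xzs \<noteq> [] \<and> z0 \<in> ualg_gen {y1} \<and> (\<forall>(x, z)\<in>set xzs. x \<in> alg_gen {y2} \<and> z \<in> ualg_gen {y1}) \<longrightarrow>
        \<omega> (z0 * prod_list (map (\<lambda>(x, z). x * z) xzs))
          = \<omega> (prod_list (map fst xzs)) * \<omega> z0 * prod_list (map (\<lambda>(x, z). \<omega> z) xzs)"
      using mi by (simp only: mono_indep_def)
    show ?thesis using h[THEN spec[where x="y1 ^ fst (dec w)"], THEN spec[where x=xzs]] z0 xz ne by simp
  qed
  moreover have "map (\<lambda>(x, z). x * z) xzs = map (\<lambda>r. y2 * y1 ^ r) (snd (dec w))"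
    by (simp add: xzs_def)
  moreover have "prod_list (map fst xzs) = y2 ^ length (snd (dec w))"
    by (simp add: xzs_def prod_list_map_const comp_def)
  moreover have "map (\<lambda>(x, z). \<omega> z) xzs = map (\<lambda>r. \<omega> (y1 ^ r)) (snd (dec w))"
    by (simp add: xzs_def)
  ultimately show ?thesis by (simp add: word_dec)
qed

fun Wsum :: "(bool list \<Rightarrow> 'b::comm_monoid_add) \<Rightarrow> nat \<Rightarrow> 'b" where
  "Wsum g 0 = g []"
| "Wsum g (Suc n) = Wsum (\<lambda>w. g (True # w)) n + Wsum (\<lambda>w. g (False # w)) n"

lemma pow_Wsum_gen: "c * (y1 + y2) ^ n = Wsum (\<lambda>w. c * word y1 y2 w) (n::nat)"
  for c y1 y2 :: "'x::ring_1"
proof (induction n arbitrary: c)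
  case 0 then show ?case by (simp add: word_def)
next
  case (Suc n)
  have "c * (y1 + y2) ^ Suc n = (c * y1) * (y1 + y2) ^ n + (c * y2) * (y1 + y2) ^ n"
    by (simp add: algebra_simps)
  also have "\<dots> = Wsum (\<lambda>w. (c * y1) * word y1 y2 w) n + Wsum (\<lambda>w. (c * y2) * word y1 y2 w) n"
    by (simp only: Suc)
  also have "\<dots> = Wsum (\<lambda>w. c * word y1 y2 w) (Suc n)"
    by (simp add: word_def mult.assoc)
  finally show ?case .
qed

lemma pow_Wsum: "(y1 + y2) ^ n = Wsum (\<lambda>w. word y1 y2 w) (n::nat)"
  for y1 y2 :: "'x::ring_1"
  using pow_Wsum_gen[of 1 y1 y2 n] by simp

lemma lin_Wsum: "clinear \<omega> \<Longrightarrow> \<omega> (Wsum g n) = Wsum (\<lambda>w. \<omega> (g w)) n"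
proof (induction n arbitrary: g)
  case 0 then show ?case by simp
next
  case (Suc n)
  have "\<omega> (Wsum g (Suc n)) = \<omega> (Wsum (\<lambda>w. g (True # w)) n) + \<omega> (Wsum (\<lambda>w. g (False # w)) n)"
    using Suc.prems by (simp only: Wsum.simps clinear_add)
  also have "\<dots> = Wsum (\<lambda>w. \<omega> (g (True # w))) n + Wsum (\<lambda>w. \<omega> (g (False # w))) n"
    using Suc.IH[OF Suc.prems] by (simp only:)
  also have "\<dots> = Wsum (\<lambda>w. \<omega> (g w)) (Suc n)" by (simp only: Wsum.simps)
  finally show ?case .
qed

lemma Wsum_cong: "(\<And>w. g w = h w) \<Longrightarrow> Wsum g n = Wsum h n"
proof -
  assume "\<And>w. g w = h w"
  then have "g = h" by (rule ext)
  then show ?thesis by simp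
qed

lemma mono_unique:
  fixes \<omega>1 :: "'x::calg_1 \<Rightarrow> complex" and \<omega>2 :: "'y::calg_1 \<Rightarrow> complex"
  assumes "cstate \<omega>1" "mono_indep \<omega>1 (alg_gen {y2}) (ualg_gen {y1})"
    and "cstate \<omega>2" "mono_indep \<omega>2 (alg_gen {z2}) (ualg_gen {z1})"
    and m1: "\<And>r. \<omega>1 (y1 ^ r) = \<omega>2 (z1 ^ r)" and m2: "\<And>r. \<omega>1 (y2 ^ r) = \<omega>2 (z2 ^ r)"
  shows "\<omega>1 ((y1 + y2) ^ n) = \<omega>2 ((z1 + z2) ^ n)"
proof -
  have l1: "clinear \<omega>1" and l2: "clinear \<omega>2" using assms by (auto simp: cstate_def)
  have "\<omega>1 ((y1 + y2) ^ n) = Wsum (\<lambda>w. \<omega>1 (word y1 y2 w)) n"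
    by (simp add: pow_Wsum lin_Wsum[OF l1])
  also have "\<dots> = Wsum (\<lambda>w. \<omega>2 (word z1 z2 w)) n"
    by (rule Wsum_cong) (simp add: mono_word[OF assms(1,2)] mono_word[OF assms(3,4)] m1 m2)
  also have "\<dots> = \<omega>2 ((z1 + z2) ^ n)"
    by (simp add: pow_Wsum lin_Wsum[OF l2])
  finally show ?thesis .
qed

lemma word_E: "word (x True) (x False) w = E x (map (\<lambda>b. (b, [:0, 1:])) w)"
proof -
  have e: "map (\<lambda>b. if b then x True else x False) w = map x w" by (rule map_cong) auto
  have "word (x True) (x False) w = prod_list (map x w)" by (simp only: word_def e)
  moreover have "E x (map (\<lambda>b. (b, [:0, 1:])) w) = prod_list (map x w)" by (simp add: E_def comp_def)
  ultimately show ?thesis by simp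
qed

lemma E_Wsum:
  fixes \<chi>1 :: "'x::calg_1 \<Rightarrow> complex" and \<chi>2 :: "'y::calg_1 \<Rightarrow> complex"
  assumes "clinear \<chi>1" "clinear \<chi>2" "\<And>zs. \<chi>1 (E x zs) = \<chi>2 (E y zs)"
  shows "\<chi>1 ((x True + x False) ^ n) = \<chi>2 ((y True + y False) ^ n)"
proof -
  have "\<chi>1 ((x True + x False) ^ n) = Wsum (\<lambda>w. \<chi>1 (word (x True) (x False) w)) n"
    by (simp add: pow_Wsum lin_Wsum[OF assms(1)])
  also have "\<dots> = Wsum (\<lambda>w. \<chi>2 (word (y True) (y False) w)) n"
    by (rule Wsum_cong) (simp add: word_E assms(3))
  also have "\<dots> = \<chi>2 ((y True + y False) ^ n)"
    by (simp add: pow_Wsum lin_Wsum[OF assms(2)])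
  finally show ?thesis .
qed

lemma free_cent:
  assumes "free2 \<omega> (ualg_gen {x True}) (ualg_gen {x False})" "zs \<noteq> []" "alternating (map fst zs)"
    "\<forall>(i, p)\<in>set zs. \<omega> (peval p (x i)) = 0"
  shows "\<omega> (E x zs) = 0"
proof -
  define xs where "xs = map (\<lambda>(i, p). peval p (x i)) zs"
  have "\<forall>k<length xs. xs ! k \<in> (if map fst zs ! k then ualg_gen {x True} else ualg_gen {x False}) \<and> \<omega> (xs ! k) = 0"
  proof (intro allI impI)
    fix k assume k: "k < length xs"
    obtain i p where zk: "zs ! k = (i, p)" by fastforce
    have "(i, p) \<in> set zs" using k zk by (metis xs_def length_map nth_mem)
    then have "\<omega> (peval p (x i)) = 0" using assms(4) by auto
    moreover have "peval p (x i) \<in> (if i then ualg_gen {x True} else ualg_gen {x False})"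
      using peval_in[of p "x i"] by (cases i) auto
    ultimately show "xs ! k \<in> (if map fst zs ! k then ualg_gen {x True} else ualg_gen {x False}) \<and> \<omega> (xs ! k) = 0"
      using k zk by (simp add: xs_def)
  qed
  moreover have "xs \<noteq> [] \<and> length (map fst zs) = length xs \<and> alternating (map fst zs)"
    using assms(2,3) by (simp add: xs_def)
  ultimately have "\<omega> (prod_list xs) = 0" using assms(1) unfolding free2_def by blast
  then show ?thesis by (simp add: E_def xs_def)
qed

lemma cfree_cent:
  assumes "cfree2 \<omega> \<psi> (ualg_gen {x True}) (ualg_gen {x False})" "zs \<noteq> []" "alternating (map fst zs)"
    "\<forall>(i, p)\<in>set zs. \<omega> (peval p (x i)) = 0"
  shows "\<psi> (E x zs) = prod_list (map (\<lambda>(i, p). \<psi> (peval p (x i))) zs)"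
proof -
  define xs where "xs = map (\<lambda>(i, p). peval p (x i)) zs"
  have "\<forall>k<length xs. xs ! k \<in> (if map fst zs ! k then ualg_gen {x True} else ualg_gen {x False}) \<and> \<omega> (xs ! k) = 0"
  proof (intro allI impI)
    fix k assume k: "k < length xs"
    obtain i p where zk: "zs ! k = (i, p)" by fastforce
    have "(i, p) \<in> set zs" using k zk by (metis xs_def length_map nth_mem)
    then have "\<omega> (peval p (x i)) = 0" using assms(4) by auto
    moreover have "peval p (x i) \<in> (if i then ualg_gen {x True} else ualg_gen {x False})"
      using peval_in[of p "x i"] by (cases i) auto
    ultimately show "xs ! k \<in> (if map fst zs ! k then ualg_gen {x True} else ualg_gen {x False}) \<and> \<omega> (xs ! k) = 0"
      using k zk by (simp add: xs_def)
  qed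
  moreover have "xs \<noteq> [] \<and> length (map fst zs) = length xs \<and> alternating (map fst zs)"
    using assms(2,3) by (simp add: xs_def)
  ultimately have h1: "\<psi> (prod_list xs) = prod_list (map \<psi> xs)" using assms(1) unfolding cfree2_def by blast
  have h2: "map \<psi> xs = map (\<lambda>(i, p). \<psi> (peval p (x i))) zs" by (simp add: xs_def case_prod_beta)
  have e1: "E x zs = prod_list xs" by (simp add: E_def xs_def)
  show ?thesis by (simp only: e1 h1 h2)
qed



context setting
begin

lemma alg_L: "x \<in> alg_gen {L (0, h)} \<Longrightarrow> \<exists>g. x = L (0, g) \<and> g \<in> alg_gen {h}"
proof (induction rule: alg_gen.induct)
  case zero then show ?case by (intro exI[of _ 0]) (simp add: L_zero alg_gen.zero)
next
  case (base s) then show ?case by (intro exI[of _ h]) (simp add: alg_gen.base)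
next
  case (add x y)
  then obtain g g' where "x = L (0, g)" "g \<in> alg_gen {h}" "y = L (0, g')" "g' \<in> alg_gen {h}" by blast
  moreover have "L (0, g) + L (0, g') = L (0, g + g')"
    using L_add[of "(0, g)" "(0, g')"] by (simp add: badd_def)
  ultimately show ?case by (intro exI[of _ "g + g'"]) (simp add: alg_gen.add)
next
  case (scale x c)
  then obtain g where "x = L (0, g)" "g \<in> alg_gen {h}" by blast
  moreover have "cscale c (L (0, g)) = L (0, cscale c g)"
    using L_scale[of c "(0, g)"] by (simp add: bscale_def)
  ultimately show ?case by (intro exI[of _ "cscale c g"]) (simp add: alg_gen.scale)
next
  case (mult x y)
  then obtain g g' where "x = L (0, g)" "g \<in> alg_gen {h}" "y = L (0, g')" "g' \<in> alg_gen {h}" by blast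
  moreover have "L (0, g) * L (0, g') = L (0, g * g')"
    by (simp add: L_mult bmul_eq)
  ultimately show ?case by (intro exI[of _ "g * g'"]) (simp add: alg_gen.mult)
qed

lemma ualg_L: "x \<in> ualg_gen {L (c, 0)} \<Longrightarrow> \<exists>d. x = L (d, 0) \<and> d \<in> ualg_gen {c}"
proof (induction rule: ualg_gen.induct)
  case one then show ?case by (intro exI[of _ 1]) (simp add: L_one ualg_gen.one)
next
  case (base s) then show ?case by (intro exI[of _ c]) (simp add: ualg_gen.base)
next
  case (add x y)
  then obtain d d' where "x = L (d, 0)" "d \<in> ualg_gen {c}" "y = L (d', 0)" "d' \<in> ualg_gen {c}" by blast
  moreover have "L (d, 0) + L (d', 0) = L (d + d', 0)"
    using L_add[of "(d, 0)" "(d', 0)"] by (simp add: badd_def)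
  ultimately show ?case by (intro exI[of _ "d + d'"]) (simp add: ualg_gen.add)
next
  case (scale x e)
  then obtain d where "x = L (d, 0)" "d \<in> ualg_gen {c}" by blast
  moreover have "cscale e (L (d, 0)) = L (cscale e d, 0)"
    using L_scale[of e "(d, 0)"] by (simp add: bscale_def)
  ultimately show ?case by (intro exI[of _ "cscale e d"]) (simp add: ualg_gen.scale)
next
  case (mult x y)
  then obtain d d' where "x = L (d, 0)" "d \<in> ualg_gen {c}" "y = L (d', 0)" "d' \<in> ualg_gen {c}" by blast
  moreover have "L (d, 0) * L (d', 0) = L (d * d', 0)"
    by (simp add: L_mult bmul_eq)
  ultimately show ?case by (intro exI[of _ "d * d'"]) (simp add: ualg_gen.mult)
qed

lemma psiL_A: "d \<in> A0 \<Longrightarrow> psiL (L (d, 0)) = \<phi> d"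
proof -
  assume d: "d \<in> A0"
  have "psiL (L (d, 0)) = psiL (prod_list (map iL [Inl (d, True)]))" by (simp add: iL_Inl)
  also have "\<dots> = psi (Bval [Inl (d, True)])" by (rule psiL_seg)
  also have "\<dots> = \<phi> (fst (tc ([Inl (d, True)] :: ('a \<times> bool + 'f) list))) * prod_list (map (\<lambda>(g, c). \<phi> c) (snd (tc ([Inl (d, True)] :: ('a \<times> bool + 'f) list))))
           * \<Phi> (lprod (P # map fst (snd (tc ([Inl (d, True)] :: ('a \<times> bool + 'f) list))))) / \<Phi> P"
  proof -
    have m1: "\<And>c j. Inl (c, j) \<in> set [Inl (d, True)] \<Longrightarrow> c \<in> A0" using d by auto
    have m2: "\<And>g. Inr g \<in> set [Inl (d, True)] \<Longrightarrow> g \<in> F0" by auto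
    show ?thesis by (rule psi_tc[OF m1 m2])
  qed
  also have "\<dots> = \<phi> d" using PP by simp
  finally show ?thesis .
qed

lemma tc_Inr: "tc (map Inr gs) = (1, map (\<lambda>g. (g, 1)) gs)"
  by (induction gs) auto

lemma psiL_F: "\<forall>g\<in>set gs. g \<in> F0 \<Longrightarrow> psiL (prod_list (map (\<lambda>g. L (0, g)) gs)) = \<Phi> (lprod (P # gs)) / \<Phi> P"
proof -
  assume gs: "\<forall>g\<in>set gs. g \<in> F0"
  have eq: "prod_list (map (\<lambda>g. L (0, g)) gs) = prod_list (map iL (map Inr gs))" by (simp add: iL_Inr comp_def)
  have "psiL (prod_list (map (\<lambda>g. L (0, g)) gs)) = psiL (prod_list (map iL (map Inr gs)))" by (simp only: eq)
  also have "\<dots> = psi (Bval (map Inr gs))" by (rule psiL_seg)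
  also have "\<dots> = \<phi> (fst (tc (map Inr gs :: ('a \<times> bool + 'f) list))) * prod_list (map (\<lambda>(g, c). \<phi> c) (snd (tc (map Inr gs :: ('a \<times> bool + 'f) list))))
           * \<Phi> (lprod (P # map fst (snd (tc (map Inr gs :: ('a \<times> bool + 'f) list))))) / \<Phi> P"
  proof -
    have m1: "\<And>c j. Inl (c, j) \<in> set (map Inr gs) \<Longrightarrow> c \<in> A0" by auto
    have m2: "\<And>g. Inr g \<in> set (map Inr gs) \<Longrightarrow> g \<in> F0" using gs by auto
    show ?thesis by (rule psi_tc[OF m1 m2])
  qed
  also have "\<dots> = \<Phi> (lprod (P # gs)) / \<Phi> P"
    by (simp add: tc_Inr st_one comp_def prod_list_map_const)
  finally show ?thesis .
qed

lemma tc_pat: "tc (concat (map (\<lambda>(g, c). [Inr g, Inl (c, i)]) gcs)) = (1, gcs)"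
  by (induction gcs) auto

lemma ffsub: "{ff i} \<subseteq> {P, f1, f2}" by (cases i) (auto simp: ff_def)

lemma mono_L: "mono_indep psiL (alg_gen {L (0, ff i)}) (ualg_gen {L (aa i, 0)})"
  unfolding mono_indep_def
proof (intro allI impI)
  fix z0 and xzs :: "(('a, 'f) lend \<times> ('a, 'f) lend) list"
  assume H: "xzs \<noteq> [] \<and> z0 \<in> ualg_gen {L (aa i, 0)} \<and> (\<forall>(x, z)\<in>set xzs. x \<in> alg_gen {L (0, ff i)} \<and> z \<in> ualg_gen {L (aa i, 0)})"
  obtain c0 where c0: "z0 = L (c0, 0)" "c0 \<in> ualg_gen {aa i}" using H ualg_L by blast
  define gof where "gof x = (SOME g. x = L (0, g) \<and> g \<in> alg_gen {ff i})" for x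
  define cof where "cof z = (SOME c. z = L (c, 0) \<and> c \<in> ualg_gen {aa i})" for z
  have gofp: "x = L (0, gof x) \<and> gof x \<in> alg_gen {ff i}" if "x \<in> alg_gen {L (0, ff i)}" for x
    unfolding gof_def by (rule someI_ex) (rule alg_L[OF that])
  have cofp: "z = L (cof z, 0) \<and> cof z \<in> ualg_gen {aa i}" if "z \<in> ualg_gen {L (aa i, 0)}" for z
    unfolding cof_def by (rule someI_ex) (rule ualg_L[OF that])
  define gcs where "gcs = map (\<lambda>(x, z). (gof x, cof z)) xzs"
  have xzs_eq: "xzs = map (\<lambda>(g, c). (L (0, g), L (c, 0))) gcs"
  proof -
    have "map (\<lambda>(g, c). (L (0, g), L (c, 0))) gcs = map (\<lambda>(x, z). (L (0, gof x), L (cof z, 0))) xzs"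
      by (simp add: gcs_def comp_def case_prod_beta)
    also have "\<dots> = xzs"
    proof (rule map_idI)
      fix xz assume "xz \<in> set xzs"
      then obtain x z where "xz = (x, z)" "x \<in> alg_gen {L (0, ff i)}" "z \<in> ualg_gen {L (aa i, 0)}"
        using H by fastforce
      then show "(case xz of (x, z) \<Rightarrow> (L (0, gof x), L (cof z, 0))) = xz"
        using gofp cofp by simp
    qed
    finally show ?thesis by simp
  qed
  have gcs_mem: "\<forall>(g, c)\<in>set gcs. g \<in> F0 \<and> c \<in> A0"
  proof
    fix gc assume "gc \<in> set gcs"
    then obtain x z where "gc = (gof x, cof z)" "x \<in> alg_gen {L (0, ff i)}" "z \<in> ualg_gen {L (aa i, 0)}"
      using H by (auto simp: gcs_def)
    moreover have "gof x \<in> F0" using gofp[OF \<open>x \<in> _\<close>] alg_gen_mono ffsub by blast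
    moreover have "cof z \<in> A0" using cofp[OF \<open>z \<in> _\<close>] aa_A0 by blast
    ultimately show "case gc of (g, c) \<Rightarrow> g \<in> F0 \<and> c \<in> A0" by simp
  qed
  have c0A: "c0 \<in> A0" using c0 aa_A0 by blast
  have ne: "gcs \<noteq> []" using H by (simp add: gcs_def)
  define items where "items = Inl (c0, i) # concat (map (\<lambda>(g, c). [Inr g, Inl (c, i)]) gcs)"
  have items_mem1: "\<And>c j. Inl (c, j) \<in> set items \<Longrightarrow> c \<in> A0"
    using gcs_mem c0A by (auto simp: items_def)
  have items_mem2: "\<And>g. Inr g \<in> set items \<Longrightarrow> g \<in> F0"
    using gcs_mem by (auto simp: items_def)
  have tci: "tc items = (c0, gcs)" by (simp add: items_def tc_pat)
  have "z0 * prod_list (map (\<lambda>(x, z). x * z) xzs) = prod_list (map iL items)"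
  proof -
    have "prod_list (map iL (concat (map (\<lambda>(g, c). [Inr g, Inl (c, i)]) gcs)))
        = prod_list (map (\<lambda>(g, c). L (0, g) * L (c, 0)) gcs)"
      by (simp add: prod_list_map_concat comp_def split_def iL_Inr iL_Inl)
    moreover have "map (\<lambda>(x, z). x * z) xzs = map (\<lambda>(g, c). L (0, g) * L (c, 0)) gcs"
      by (simp add: xzs_eq comp_def case_prod_beta)
    ultimately show ?thesis by (simp add: items_def c0 iL_Inl)
  qed
  then have "psiL (z0 * prod_list (map (\<lambda>(x, z). x * z) xzs)) = psi (Bval items)" by (simp add: psiL_seg)
  also have "\<dots> = \<phi> c0 * prod_list (map (\<lambda>(g, c). \<phi> c) gcs) * \<Phi> (lprod (P # map fst gcs)) / \<Phi> P"
    using psi_tc[OF items_mem1 items_mem2] tci by simp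
  finally have lhs: "psiL (z0 * prod_list (map (\<lambda>(x, z). x * z) xzs))
     = \<phi> c0 * prod_list (map (\<lambda>(g, c). \<phi> c) gcs) * \<Phi> (lprod (P # map fst gcs)) / \<Phi> P" .
  have r1: "psiL (prod_list (map fst xzs)) = \<Phi> (lprod (P # map fst gcs)) / \<Phi> P"
  proof -
    have e: "map fst xzs = map (\<lambda>g. L (0, g)) (map fst gcs)" by (simp add: xzs_eq comp_def case_prod_beta)
    have "\<forall>g\<in>set (map fst gcs). g \<in> F0" using gcs_mem by auto
    from psiL_F[OF this] show ?thesis by (simp only: e)
  qed
  have r2: "psiL z0 = \<phi> c0" using c0 c0A psiL_A by simp
  have r3: "map (\<lambda>(x, z). psiL z) xzs = map (\<lambda>(g, c). \<phi> c) gcs"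
  proof -
    have "map (\<lambda>(x, z). psiL z) xzs = map (\<lambda>(g, c). psiL (L (c, 0))) gcs"
      by (simp add: xzs_eq comp_def case_prod_beta)
    also have "\<dots> = map (\<lambda>(g, c). \<phi> c) gcs"
      by (rule map_cong) (use gcs_mem psiL_A in auto)
    finally show ?thesis .
  qed
  show "psiL (z0 * prod_list (map (\<lambda>(x, z). x * z) xzs))
     = psiL (prod_list (map fst xzs)) * psiL z0 * prod_list (map (\<lambda>(x, z). psiL z) xzs)"
    unfolding lhs r1 r2 r3 by simp
qed

lemma L_A_pow: "L (c, 0) ^ r = L (c ^ r, 0)"
  by (induction r) (simp_all add: L_one L_mult bmul_eq)

lemma psiL_mom_A: "psiL (L (aa i, 0) ^ r) = \<phi> (aa i ^ r)"
proof -
  have "aa i ^ r \<in> A0" using aa_A0 ualg_gen_pow ualg_gen.base by blast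
  then show ?thesis by (simp add: L_A_pow psiL_A)
qed

lemma psiL_mom_F: "psiL (L (0, ff i) ^ r) = psi (bpow lm rm (0, ff i) r)"
  by (simp add: L_pow psiL_L)

lemma Lb_pow_psi: "psiL (Lb i ^ n) = psi (bpow lm rm (aa i, ff i) n)"
  by (simp add: Lb_def L_pow psiL_L)

lemma Lb_pow_phi: "phiL (Lb i ^ n) = \<phi> (aa i ^ n)"
  by (simp add: Lb_def L_pow phiL_L fst_bpow)

end



theorem corollary4p4:
  fixes \<phi> :: "'a::calg_1 \<Rightarrow> complex" and \<Phi> :: "'f::calg \<Rightarrow> complex"
    and lm :: "'a \<Rightarrow> 'f \<Rightarrow> 'f" and rm :: "'f \<Rightarrow> 'a \<Rightarrow> 'f"
    and a1 a2 :: 'a and f1 f2 P :: 'f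
  assumes ncps: "ncps_B' \<phi> \<Phi> lm rm"
    and P: "\<Phi> P \<noteq> 0"
    and free: "free2 \<phi> (ualg_gen {a1}) (ualg_gen {a2})"
    and cam: "cam_indep \<phi> \<Phi> lm rm (ualg_gen {a1, a2}) (alg_gen {P, f1, f2})"
    and bool: "bool_indepB lm rm (phiP \<Phi> lm rm P)
                 (balg_gen lm rm {(0, f1)}) (balg_gen lm rm {(0, f2)})"
  shows "free_conv_is TYPE('c::calg_1) (distr \<phi> a1) (distr \<phi> a2)
           (distrB (phiB \<phi>) lm rm (badd (a1, f1) (a2, f2)))
       \<and> cfree_antimono_conv_is TYPE('d::calg_1) TYPE('e::calg_1)
           (distr \<phi> a1) (distrB (phiP \<Phi> lm rm P) lm rm (0, f1))
           (distr \<phi> a2) (distrB (phiP \<Phi> lm rm P) lm rm (0, f2))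
           (distrB (phiP \<Phi> lm rm P) lm rm (badd (a1, f1) (a2, f2)))"
proof -
  have bm: "bimod_alg lm rm" and st: "cstate \<phi>" and lin: "clinear \<Phi>"
    using ncps by (auto simp: ncps_B'_def)
  interpret S: setting lm rm \<phi> \<Phi> a1 a2 f1 f2 P
    by unfold_locales (fact bm st lin P free cam bool)+
  have l\<phi>: "clinear \<phi>" "\<phi> 1 = 1" using st by (auto simp: cstate_def)
  have part1: "free_conv_is TYPE('c::calg_1) (distr \<phi> a1) (distr \<phi> a2)
           (distrB (phiB \<phi>) lm rm (badd (a1, f1) (a2, f2)))"
    unfolding free_conv_is_def
  proof (intro allI impI)
    fix \<omega> :: "'c \<Rightarrow> complex" and y1 y2
    assume H: "cstate \<omega> \<and> free2 \<omega> (ualg_gen {y1}) (ualg_gen {y2}) \<and>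
        distr \<omega> y1 = distr \<phi> a1 \<and> distr \<omega> y2 = distr \<phi> a2"
    define x where "x b = (if b then y1 else y2)" for b
    define y where "y b = (if b then a1 else a2)" for b
    have l\<omega>: "clinear \<omega>" "\<omega> 1 = 1" using H by (auto simp: cstate_def)
    have mom: "\<omega> (x b ^ k) = \<phi> (y b ^ k)" for b k
    proof (cases b)
      case True
      have "distr \<omega> y1 k = distr \<phi> a1 k" using H by simp
      then show ?thesis using True by (simp add: x_def y_def distr_def)
    next
      case False
      have "distr \<omega> y2 k = distr \<phi> a2 k" using H by simp
      then show ?thesis using False by (simp add: x_def y_def distr_def)
    qed
    have pm: "\<omega> (peval p (x b)) = \<phi> (peval p (y b))" for p b
      by (rule peval_moments[OF l\<omega>(1) l\<phi>(1) mom])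
    have fx: "free2 \<omega> (ualg_gen {x True}) (ualg_gen {x False})" using H by (simp add: x_def)
    have fy: "free2 \<phi> (ualg_gen {y True}) (ualg_gen {y False})" using free by (simp add: y_def)
    have EE: "\<omega> (E x zs) = \<phi> (E y zs)" for zs
    proof (rule unique_E[where ?\<omega>1.0 = \<omega>])
      show "clinear \<omega>" "\<omega> 1 = 1" "clinear \<phi>" "\<phi> 1 = 1" "clinear \<omega>" "\<omega> 1 = 1" using l\<omega> l\<phi> by auto
      fix zs :: "(bool \<times> complex poly) list"
      assume a: "zs \<noteq> []" "alternating (map fst zs)" "\<forall>(i, p)\<in>set zs. \<omega> (peval p (x i)) = 0"
      have "\<forall>(i, p)\<in>set zs. \<phi> (peval p (y i)) = 0" using a(3) pm by auto
      then have "\<phi> (E y zs) = 0" using free_cent[OF fy a(1,2)] by blast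
      moreover have "\<omega> (E x zs) = 0" using free_cent[OF fx a(1,2,3)] .
      ultimately show "\<omega> (E x zs) = \<phi> (E y zs)" by simp
    qed
    show "distr \<omega> (y1 + y2) = distrB (phiB \<phi>) lm rm (badd (a1, f1) (a2, f2))"
    proof (rule ext)
      fix n
      have "\<omega> ((x True + x False) ^ n) = \<phi> ((y True + y False) ^ n)"
        by (rule E_Wsum[OF l\<omega>(1) l\<phi>(1) EE])
      moreover have "distrB (phiB \<phi>) lm rm (badd (a1, f1) (a2, f2)) n = \<phi> ((a1 + a2) ^ n)"
        by (simp add: distrB_def phiB_def S.fst_bpow badd_def)
      ultimately show "distr \<omega> (y1 + y2) n = distrB (phiB \<phi>) lm rm (badd (a1, f1) (a2, f2)) n"
        by (simp add: distr_def x_def y_def)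
    qed
  qed
  have part2: "cfree_antimono_conv_is TYPE('d::calg_1) TYPE('e::calg_1)
           (distr \<phi> a1) (distrB (phiP \<Phi> lm rm P) lm rm (0, f1))
           (distr \<phi> a2) (distrB (phiP \<Phi> lm rm P) lm rm (0, f2))
           (distrB (phiP \<Phi> lm rm P) lm rm (badd (a1, f1) (a2, f2)))"
    unfolding cfree_antimono_conv_is_def
  proof (intro allI impI)
    fix \<omega> :: "'d \<Rightarrow> complex" and \<psi> c1 c2
    assume H: "cstate \<omega> \<and> cstate \<psi> \<and> cfree2 \<omega> \<psi> (ualg_gen {c1}) (ualg_gen {c2}) \<and>
        distr \<omega> c1 = distr \<phi> a1 \<and> distr \<omega> c2 = distr \<phi> a2 \<and>
        antimono_conv_in TYPE('e) (distr \<phi> a1) (distrB (phiP \<Phi> lm rm P) lm rm (0, f1)) (distr \<psi> c1) \<and>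
        antimono_conv_in TYPE('e) (distr \<phi> a2) (distrB (phiP \<Phi> lm rm P) lm rm (0, f2)) (distr \<psi> c2)"
    define x where "x b = (if b then c1 else c2)" for b
    have l\<omega>: "clinear \<omega>" "\<omega> 1 = 1" using H by (auto simp: cstate_def)
    have l\<psi>: "clinear \<psi>" "\<psi> 1 = 1" using H by (auto simp: cstate_def)
    have cpsiL: "cstate S.psiL" using S.psiL_state by (simp add: cstate_def)
    have omom: "\<omega> (x b ^ k) = S.phiL (S.Lb b ^ k)" for b k
    proof (cases b)
      case True
      have "distr \<omega> c1 k = distr \<phi> a1 k" using H by simp
      then show ?thesis using True by (simp add: x_def distr_def S.Lb_pow_phi S.aa_def)
    next
      case False
      have "distr \<omega> c2 k = distr \<phi> a2 k" using H by simp
      then show ?thesis using False by (simp add: x_def distr_def S.Lb_pow_phi S.aa_def)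
    qed
    have psimom: "\<psi> (x b ^ k) = S.psiL (S.Lb b ^ k)" for b k
    proof -
      have am: "antimono_conv_in TYPE('e) (distr \<phi> (S.aa b)) (distrB (phiP \<Phi> lm rm P) lm rm (0, S.ff b)) (distr \<psi> (x b))"
        using H by (cases b) (simp_all add: x_def S.aa_def S.ff_def)
      then obtain \<omega>e :: "'e \<Rightarrow> complex" and z1 z2 where W: "cstate \<omega>e" "mono_indep \<omega>e (alg_gen {z2}) (ualg_gen {z1})"
        "distr \<omega>e z1 = distr \<phi> (S.aa b)" "distr \<omega>e z2 = distrB (phiP \<Phi> lm rm P) lm rm (0, S.ff b)"
        "distr \<omega>e (z1 + z2) = distr \<psi> (x b)"
        unfolding antimono_conv_in_def by blast
      have m1: "\<omega>e (z1 ^ r) = S.psiL (S.L (S.aa b, 0) ^ r)" for r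
        using fun_cong[OF W(3), of r] by (simp add: distr_def S.psiL_mom_A)
      have m2: "\<omega>e (z2 ^ r) = S.psiL (S.L (0, S.ff b) ^ r)" for r
        using fun_cong[OF W(4), of r] by (simp add: distr_def distrB_def S.psiL_mom_F)
      have "\<psi> (x b ^ k) = \<omega>e ((z1 + z2) ^ k)" using fun_cong[OF W(5), of k] by (simp add: distr_def)
      also have "\<dots> = S.psiL ((S.L (S.aa b, 0) + S.L (0, S.ff b)) ^ k)"
        by (rule mono_unique[OF W(1,2) cpsiL S.mono_L m1 m2])
      also have "\<dots> = S.psiL (S.Lb b ^ k)" by (simp add: S.Lb_split)
      finally show ?thesis .
    qed
    have pm\<omega>: "\<omega> (peval p (x b)) = S.phiL (peval p (S.Lb b))" for p b
      by (rule peval_moments[OF l\<omega>(1) S.phiL_state(1) omom])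
    have pm\<psi>: "\<psi> (peval p (x b)) = S.psiL (peval p (S.Lb b))" for p b
      by (rule peval_moments[OF l\<psi>(1) S.psiL_state(1) psimom])
    have cx: "cfree2 \<omega> \<psi> (ualg_gen {x True}) (ualg_gen {x False})" using H by (simp add: x_def)
    have EE: "\<psi> (E x zs) = S.psiL (E S.Lb zs)" for zs
    proof (rule unique_E[where ?\<omega>1.0 = \<omega>])
      show "clinear \<psi>" "\<psi> 1 = 1" "clinear S.psiL" "S.psiL 1 = 1" "clinear \<omega>" "\<omega> 1 = 1"
        using l\<omega> l\<psi> S.psiL_state by auto
      fix zs :: "(bool \<times> complex poly) list"
      assume a: "zs \<noteq> []" "alternating (map fst zs)" "\<forall>(i, p)\<in>set zs. \<omega> (peval p (x i)) = 0"
      have c2: "\<forall>(i, p)\<in>set zs. S.phiL (peval p (S.Lb i)) = 0" using a(3) pm\<omega> by auto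
      have "\<psi> (E x zs) = prod_list (map (\<lambda>(i, p). \<psi> (peval p (x i))) zs)"
        by (rule cfree_cent[OF cx a])
      also have "map (\<lambda>(i, p). \<psi> (peval p (x i))) zs = map (\<lambda>(i, p). S.psiL (peval p (S.Lb i))) zs"
        by (rule map_cong) (auto simp: pm\<psi>)
      also have "prod_list \<dots> = S.psiL (E S.Lb zs)"
        by (rule S.cfreeL[OF a(2) c2, symmetric])
      finally show "\<psi> (E x zs) = S.psiL (E S.Lb zs)" .
    qed
    show "distr \<psi> (c1 + c2) = distrB (phiP \<Phi> lm rm P) lm rm (badd (a1, f1) (a2, f2))"
    proof (rule ext)
      fix n
      have "\<psi> ((x True + x False) ^ n) = S.psiL ((S.Lb True + S.Lb False) ^ n)"
        by (rule E_Wsum[OF l\<psi>(1) S.psiL_state(1) EE])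
      moreover have "S.Lb True + S.Lb False = S.L (badd (a1, f1) (a2, f2))"
        by (simp add: S.Lb_def S.L_add S.aa_def S.ff_def)
      moreover have "S.psiL (S.L (badd (a1, f1) (a2, f2)) ^ n) = distrB (phiP \<Phi> lm rm P) lm rm (badd (a1, f1) (a2, f2)) n"
        by (simp add: S.L_pow S.psiL_L distrB_def)
      ultimately show "distr \<psi> (c1 + c2) n = distrB (phiP \<Phi> lm rm P) lm rm (badd (a1, f1) (a2, f2)) n"
        by (simp add: distr_def x_def)
    qed
  qed
  show ?thesis using part1 part2 by blast
qed


end
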